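(* Suppose the pair $\{E,F\}$, $E,F:\mathcal I\to\mathbb R^{m\times m}$ sufficiently smooth, is equivalent to a pair in standard canonical form $\left\{\begin{bmatrix}I_d&0\\0&N\end{bmatrix},\begin{bmatrix}\Omega&0\\0&I_a\end{bmatrix}\right\}$ with $a=m-d$, $\Omega:\mathcal I\to\mathbb R^{d\times d}$ and $N:\mathcal I\to\mathbb R^{a\times a}$ pointwise strictly upper triangular (rank of $N$ not necessarily constant). Then (1) $\operatorname{rank}\mathcal E_{[k]}(t)=\operatorname{rank}\mathcal D_{[k]}(t)=km+d$ for all $t\in\mathcal I$ and all $k\ge a-1$; (2) $\dim(\ker E(t)\cap S_{[k]}(t))=0$ for all $t\in\mathcal I$ and all $k\ge a$.
   Context: Two pairs are equivalent if $\tilde E=LEK$, $\tilde F=LFK+LEK'$ for pointwise nonsingular sufficiently smooth $L,K$. Derivative arrays: $\mathcal E_{[k]}$ is the $(k+1)m\times(k+1)m$ block lower triangular matrix function with $(i,j)$ block ($0\le j\le i\le k$) $\binom{i}{j}E^{(i-j)}+\binom{i}{j+1}F^{(i-j-1)}$ (the $F$-term absent for $j=i$), zero for $j>i$; $\mathcal F_{[k]}=[F;F';\dots;F^{(k)}]$; $\mathcal D_{[0]}=E$, $\mathcal D_{[k]}=\begin{bmatrix}E&0\\\mathcal F_{[k-1]}&\mathcal E_{[k-1]}\end{bmatrix}$ for $k\ge1$; $S_{[k]}(t)=\{z:\mathcal F_{[k]}(t)z\in\operatorname{im}\mathcal E_{[k]}(t)\}$. *)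

theory Defs
  imports "HOL-Analysis.Analysis" "Jordan_Normal_Form.DL_Rank" "Jordan_Normal_Form.Matrix_Kernel"
begin

definition mderiv :: "nat \<Rightarrow> (real \<Rightarrow> real mat) \<Rightarrow> real \<Rightarrow> real mat" where
  "mderiv k A t = mat (dim_row (A t)) (dim_col (A t)) (\<lambda>(i,j). (deriv ^^ k) (\<lambda>s. A s $$ (i,j)) t)"

(* A : I -> R^{r x c}, with all entries infinitely differentiable on I ("sufficiently smooth") *)
definition smooth_mat_on :: "real set \<Rightarrow> nat \<Rightarrow> nat \<Rightarrow> (real \<Rightarrow> real mat) \<Rightarrow> bool" where
  "smooth_mat_on I r c A \<longleftrightarrow> (\<forall>t\<in>I. A t \<in> carrier_mat r c) \<and>
     (\<forall>i<r. \<forall>j<c. \<forall>k. \<forall>t\<in>I. ((deriv ^^ k) (\<lambda>s. A s $$ (i,j))) differentiable (at t))"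

definition equiv_pair :: "real set \<Rightarrow> nat \<Rightarrow> (real \<Rightarrow> real mat) \<Rightarrow> (real \<Rightarrow> real mat)
     \<Rightarrow> (real \<Rightarrow> real mat) \<Rightarrow> (real \<Rightarrow> real mat) \<Rightarrow> bool" where
  "equiv_pair I m E F E' F' \<longleftrightarrow> (\<exists>L K. smooth_mat_on I m m L \<and> smooth_mat_on I m m K \<and>
     (\<forall>t\<in>I. det (L t) \<noteq> 0 \<and> det (K t) \<noteq> 0 \<and>
        E' t = L t * E t * K t \<and>
        F' t = L t * F t * K t + L t * E t * mderiv 1 K t))"

definition strictly_upper_triangular :: "nat \<Rightarrow> real mat \<Rightarrow> bool" where
  "strictly_upper_triangular n A \<longleftrightarrow> (\<forall>i<n. \<forall>j<n. j \<le> i \<longrightarrow> A $$ (i,j) = 0)"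

definition calE :: "nat \<Rightarrow> (real \<Rightarrow> real mat) \<Rightarrow> (real \<Rightarrow> real mat) \<Rightarrow> nat \<Rightarrow> real \<Rightarrow> real mat" where
  "calE m E F k t = mat ((k+1)*m) ((k+1)*m) (\<lambda>(p,q).
     (let i = p div m; j = q div m; r = p mod m; c = q mod m in
      if j \<le> i then
        of_nat (i choose j) * (mderiv (i-j) E t $$ (r,c))
        + (if j < i then of_nat (i choose (j+1)) * (mderiv (i-j-1) F t $$ (r,c)) else 0)
      else 0))"

definition calF :: "nat \<Rightarrow> (real \<Rightarrow> real mat) \<Rightarrow> nat \<Rightarrow> real \<Rightarrow> real mat" where
  "calF m F k t = mat ((k+1)*m) m (\<lambda>(p,c). mderiv (p div m) F t $$ (p mod m, c))"

definition calD :: "nat \<Rightarrow> (real \<Rightarrow> real mat) \<Rightarrow> (real \<Rightarrow> real mat) \<Rightarrow> nat \<Rightarrow> real \<Rightarrow> real mat" where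
  "calD m E F k t = (if k = 0 then E t else
     four_block_mat (E t) (0\<^sub>m m (k*m)) (calF m F (k-1) t) (calE m E F (k-1) t))"

definition calS :: "nat \<Rightarrow> (real \<Rightarrow> real mat) \<Rightarrow> (real \<Rightarrow> real mat) \<Rightarrow> nat \<Rightarrow> real \<Rightarrow> real vec set" where
  "calS m E F k t = {z \<in> carrier_vec m. \<exists>y \<in> carrier_vec ((k+1)*m). calF m F k t *\<^sub>v z = calE m E F k t *\<^sub>v y}"

definition mrank :: "real mat \<Rightarrow> nat" where
  "mrank A = vec_space.rank (dim_row A) A"

definition subspace_dim :: "nat \<Rightarrow> real vec set \<Rightarrow> nat" where
  "subspace_dim n W = vectorspace.dim class_ring ((module_vec TYPE(real) n)\<lparr>carrier := W\<rparr>)"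

end

theory Submission
  imports Defs
begin

no_notation vec_nth (infixl \<open>$\<close> 90)


definition smooth :: "real set \<Rightarrow> (real \<Rightarrow> real) \<Rightarrow> bool" where
  "smooth I f \<longleftrightarrow> (\<forall>k. \<forall>t\<in>I. ((deriv ^^ k) f) differentiable (at t))"

lemma funpow_deriv_Suc: "(deriv ^^ Suc k) f = deriv ((deriv ^^ k) f)" by simp

lemma funpow_deriv_Suc': "(deriv ^^ Suc k) f = (deriv ^^ k) (deriv f)"
  by (simp only: funpow_Suc_right o_apply)

lemma higher_deriv_local:
  assumes "open I" "\<And>s. s \<in> I \<Longrightarrow> f s = g s" "s \<in> I"
  shows "(deriv ^^ k) f s = (deriv ^^ k) g s"
  using assms(3)
proof (induction k arbitrary: s)
  case 0 then show ?case using assms by simp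
next
  case (Suc k)
  have ev: "\<forall>\<^sub>F x in nhds s. (deriv ^^ k) f x = (deriv ^^ k) g x"
    using Suc assms(1) unfolding eventually_nhds by blast
  show ?case using deriv_cong_ev[OF ev refl] by simp
qed

lemma smooth_hasderiv:
  assumes "smooth I f" "t \<in> I"
  shows "((deriv ^^ k) f has_real_derivative (deriv ^^ Suc k) f t) (at t)"
  using assms unfolding smooth_def funpow_deriv_Suc
  using DERIV_deriv_iff_real_differentiable by blast

lemma smooth_local:
  assumes "open I" "smooth I f" "\<And>s. s \<in> I \<Longrightarrow> f s = g s"
  shows "smooth I g"
  unfolding smooth_def
proof (intro allI ballI)
  fix k t assume t: "t \<in> I"
  have "((deriv ^^ k) g has_real_derivative (deriv ^^ Suc k) f t) (at t)"
    by (rule has_field_derivative_transform_within_open[OF smooth_hasderiv[OF assms(2) t] assms(1) t])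
       (rule higher_deriv_local[OF assms(1,3)])
  then show "(deriv ^^ k) g differentiable at t"
    using real_differentiable_def by blast
qed

lemma smooth_deriv:
  assumes "smooth I f" shows "smooth I (deriv f)"
  using assms unfolding smooth_def by (metis funpow_deriv_Suc')

lemma smooth_funpow:
  assumes "smooth I f" shows "smooth I ((deriv ^^ k) f)"
  using assms by (induction k) (auto intro: smooth_deriv)

lemma smooth_differentiable:
  assumes "smooth I f" "t \<in> I" shows "f differentiable (at t)"
  using assms unfolding smooth_def by (metis funpow_0)

lemma my_Suc_choose: "Suc n choose k = (n choose k) + (if k = 0 then 0 else (n choose (k-1)))"
  by (cases k) simp_all

lemma leibniz:
  assumes I: "open I" and f: "smooth I f" and g: "smooth I g" and z: "z \<in> I"
  shows "(deriv ^^ n) (\<lambda>w. f w * g w) z =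
           (\<Sum>i = 0..n. of_nat (n choose i) * (deriv ^^ i) f z * (deriv ^^ (n-i)) g z)"
using z
proof (induction n arbitrary: z)
  case 0 then show ?case by simp
next
  case (Suc n z)
  have *: "\<And>n. ((deriv ^^ n) f has_field_derivative deriv ((deriv ^^ n) f) z) (at z)"
          "\<And>n. ((deriv ^^ n) g has_field_derivative deriv ((deriv ^^ n) g) z) (at z)"
    using smooth_hasderiv[OF f Suc.prems] smooth_hasderiv[OF g Suc.prems] by auto
  have sumeq: "(\<Sum>i = 0..n.
               of_nat (n choose i) * (deriv ((deriv ^^ i) f) z * (deriv ^^ (n-i)) g z + deriv ((deriv ^^ (n-i)) g) z * (deriv ^^ i) f z)) =
            g z * deriv ((deriv ^^ n) f) z + (\<Sum>i = 0..n. (deriv ^^ i) f z * (of_nat (Suc n choose i) * (deriv ^^ (Suc n - i)) g z))"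
    apply (simp add: my_Suc_choose algebra_simps sum.distrib)
    apply (subst (4) sum_Suc_reindex)
    apply (auto simp: algebra_simps Suc_diff_le intro: sum.cong)
    done
  have "((deriv ^^ n) (\<lambda>w. f w * g w) has_field_derivative
         (\<Sum>i = 0..Suc n. (Suc n choose i) * (deriv ^^ i) f z * (deriv ^^ (Suc n - i)) g z))
        (at z)"
    apply (rule has_field_derivative_transform_within_open
        [of "\<lambda>w. (\<Sum>i = 0..n. of_nat (n choose i) * (deriv ^^ i) f w * (deriv ^^ (n-i)) g w)" _ _ I])
       apply (simp add: algebra_simps)
       apply (rule derivative_eq_intros | simp)+
           apply (auto intro: DERIV_mult * I Suc.prems Suc.IH [symmetric])
    by (metis (no_types, lifting) mult.commute sum.cong sumeq)
  then show ?case
    unfolding funpow.simps o_apply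
    by (simp add: DERIV_imp_deriv)
qed

lemma smooth_const: "smooth I (\<lambda>x. c)"
proof -
  have "\<And>k. (deriv ^^ k) (\<lambda>x::real. c) = (if k = 0 then (\<lambda>x. c) else (\<lambda>x. 0))"
  proof -
    fix k show "(deriv ^^ k) (\<lambda>x::real. c) = (if k = 0 then (\<lambda>x. c) else (\<lambda>x. 0))"
      by (induction k) auto
  qed
  then show ?thesis unfolding smooth_def by auto
qed

lemma higher_deriv_const_fun: "(deriv ^^ Suc k) (\<lambda>x::real. c) = (\<lambda>x. 0)"
proof (induction k)
  case 0 show ?case by (rule ext) simp
next
  case (Suc k)
  have "(deriv ^^ Suc (Suc k)) (\<lambda>x::real. c) = deriv ((deriv ^^ Suc k) (\<lambda>x::real. c))"
    by (simp only: funpow_deriv_Suc)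
  also have "\<dots> = (\<lambda>x. 0)" unfolding Suc by (rule ext) simp
  finally show ?case .
qed

lemma higher_deriv_const: "(deriv ^^ Suc k) (\<lambda>x::real. c) t = 0"
  by (simp only: higher_deriv_const_fun)

lemma higher_deriv_add:
  assumes I: "open I" and f: "smooth I f" and g: "smooth I g" and z: "z \<in> I"
  shows "(deriv ^^ n) (\<lambda>w. f w + g w) z = (deriv ^^ n) f z + (deriv ^^ n) g z"
  using z
proof (induction n arbitrary: z)
  case 0 then show ?case by simp
next
  case (Suc n)
  have "((deriv ^^ n) (\<lambda>w. f w + g w) has_real_derivative (deriv ^^ Suc n) f z + (deriv ^^ Suc n) g z) (at z)"
    apply (rule has_field_derivative_transform_within_open[of "\<lambda>w. (deriv ^^ n) f w + (deriv ^^ n) g w" _ _ I])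
    using smooth_hasderiv[OF f Suc.prems] smooth_hasderiv[OF g Suc.prems] Suc I
    by (auto intro!: derivative_eq_intros)
  then show ?case unfolding funpow_deriv_Suc by (rule DERIV_imp_deriv)
qed

lemma smooth_add:
  assumes I: "open I" and f: "smooth I f" and g: "smooth I g"
  shows "smooth I (\<lambda>w. f w + g w)"
  unfolding smooth_def
proof (intro allI ballI)
  fix k t assume t: "t \<in> I"
  have "((deriv ^^ k) (\<lambda>w. f w + g w) has_real_derivative (deriv ^^ Suc k) f t + (deriv ^^ Suc k) g t) (at t)"
    apply (rule has_field_derivative_transform_within_open[of "\<lambda>w. (deriv ^^ k) f w + (deriv ^^ k) g w" _ _ I])
    using smooth_hasderiv[OF f t] smooth_hasderiv[OF g t] t I higher_deriv_add[OF I f g]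
    by (auto intro!: derivative_eq_intros)
  then show "(deriv ^^ k) (\<lambda>w. f w + g w) differentiable at t"
    using real_differentiable_def by blast
qed

lemma smooth_mult:
  assumes I: "open I" and f: "smooth I f" and g: "smooth I g"
  shows "smooth I (\<lambda>w. f w * g w)"
  unfolding smooth_def
proof (intro allI ballI)
  fix k t assume t: "t \<in> I"
  have "((\<lambda>w. \<Sum>i = 0..k. of_nat (k choose i) * (deriv ^^ i) f w * (deriv ^^ (k-i)) g w) has_real_derivative
        (\<Sum>i = 0..k. of_nat (k choose i) * ((deriv ^^ Suc i) f t * (deriv ^^ (k-i)) g t + (deriv ^^ i) f t * (deriv ^^ Suc (k-i)) g t))) (at t)"
    using smooth_hasderiv[OF f t] smooth_hasderiv[OF g t]
    by (auto intro!: derivative_eq_intros simp: algebra_simps simp del: funpow.simps)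
  then have "((deriv ^^ k) (\<lambda>w. f w * g w) has_real_derivative
        (\<Sum>i = 0..k. of_nat (k choose i) * ((deriv ^^ Suc i) f t * (deriv ^^ (k-i)) g t + (deriv ^^ i) f t * (deriv ^^ Suc (k-i)) g t))) (at t)"
    by (rule has_field_derivative_transform_within_open[OF _ I t]) (use leibniz[OF I f g] in auto)
  then show "(deriv ^^ k) (\<lambda>w. f w * g w) differentiable at t"
    using real_differentiable_def by blast
qed

lemma smooth_sum:
  assumes I: "open I" and f: "\<And>i. i \<in> S \<Longrightarrow> smooth I (f i)"
  shows "smooth I (\<lambda>w. \<Sum>i\<in>S. f i w)"
  using f
proof (induction S rule: infinite_finite_induct)
  case (infinite A) then show ?case by (simp add: smooth_const)
next
  case empty then show ?case by (simp add: smooth_const)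
next
  case (insert x F)
  then show ?case by (simp add: smooth_add[OF I])
qed

lemma higher_deriv_sum:
  assumes I: "open I" and f: "\<And>i. i \<in> S \<Longrightarrow> smooth I (f i)" and z: "z \<in> I"
  shows "(deriv ^^ n) (\<lambda>w. \<Sum>i\<in>S. f i w) z = (\<Sum>i\<in>S. (deriv ^^ n) (f i) z)"
  using f
proof (induction S rule: infinite_finite_induct)
  case (infinite A) then show ?case by (cases n) (simp_all add: higher_deriv_const del: funpow.simps)
next
  case empty then show ?case by (cases n) (simp_all add: higher_deriv_const del: funpow.simps)
next
  case (insert x F)
  then show ?case
    by (simp add: higher_deriv_add[OF I _ smooth_sum[OF I] z] del: funpow.simps)
qed

lemma higher_deriv_cmult:
  assumes I: "open I" and f: "smooth I f" and z: "z \<in> I"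
  shows "(deriv ^^ n) (\<lambda>w. c * f w) z = c * (deriv ^^ n) f z"
  using z
proof (induction n arbitrary: z)
  case 0 then show ?case by simp
next
  case (Suc n)
  have "((deriv ^^ n) (\<lambda>w. c * f w) has_real_derivative c * (deriv ^^ Suc n) f z) (at z)"
    apply (rule has_field_derivative_transform_within_open[of "\<lambda>w. c * (deriv ^^ n) f w" _ _ I])
    using smooth_hasderiv[OF f Suc.prems] Suc I
    by (auto intro!: derivative_eq_intros)
  then show ?case unfolding funpow_deriv_Suc by (rule DERIV_imp_deriv)
qed

lemma smooth_cmult:
  assumes I: "open I" and f: "smooth I f"
  shows "smooth I (\<lambda>w. c * f w)"
  using smooth_mult[OF I smooth_const f] .



lemma smooth_mat_entry:
  assumes "smooth_mat_on I r c A" "i < r" "j < c"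
  shows "smooth I (\<lambda>s. A s $$ (i,j))"
  using assms unfolding smooth_mat_on_def smooth_def by blast

lemma smooth_mat_carrier:
  assumes "smooth_mat_on I r c A" "t \<in> I"
  shows "A t \<in> carrier_mat r c"
  using assms unfolding smooth_mat_on_def by blast

lemma mderiv_index:
  assumes "A t \<in> carrier_mat r c" "i < r" "j < c"
  shows "mderiv k A t $$ (i,j) = (deriv ^^ k) (\<lambda>s. A s $$ (i,j)) t"
  using assms unfolding mderiv_def by auto

lemma mderiv_carrier:
  assumes "A t \<in> carrier_mat r c"
  shows "mderiv k A t \<in> carrier_mat r c"
  using assms unfolding mderiv_def by auto

lemma mderiv_0:
  assumes "A t \<in> carrier_mat r c"
  shows "mderiv 0 A t = A t"
  using assms unfolding mderiv_def by (auto intro!: eq_matI)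

definition smooth_vec :: "real set \<Rightarrow> nat \<Rightarrow> (real \<Rightarrow> real vec) \<Rightarrow> bool" where
  "smooth_vec I n x \<longleftrightarrow> (\<forall>t\<in>I. x t \<in> carrier_vec n) \<and> (\<forall>c<n. smooth I (\<lambda>s. x s $ c))"

definition jet :: "nat \<Rightarrow> nat \<Rightarrow> (real \<Rightarrow> real vec) \<Rightarrow> real \<Rightarrow> real vec" where
  "jet n m x t = vec (Suc n * m) (\<lambda>p. (deriv ^^ (p div m)) (\<lambda>s. x s $ (p mod m)) t)"

definition vderiv1 :: "nat \<Rightarrow> (real \<Rightarrow> real vec) \<Rightarrow> real \<Rightarrow> real vec" where
  "vderiv1 m x s = vec m (\<lambda>c. deriv (\<lambda>s. x s $ c) s)"

definition bmat :: "nat \<Rightarrow> nat \<Rightarrow> (nat \<Rightarrow> nat \<Rightarrow> nat \<Rightarrow> nat \<Rightarrow> real) \<Rightarrow> real mat" where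
  "bmat n m B = mat (n*m) (n*m) (\<lambda>(p,q). B (p div m) (q div m) (p mod m) (q mod m))"

definition TM :: "nat \<Rightarrow> nat \<Rightarrow> (real \<Rightarrow> real mat) \<Rightarrow> real \<Rightarrow> real mat" where
  "TM n m A t = bmat (Suc n) m (\<lambda>i j r c. if j \<le> i then of_nat (i choose j) * mderiv (i-j) A t $$ (r,c) else 0)"

lemma idx_div[simp]: "r < m \<Longrightarrow> (i*m+r) div m = (i::nat)"
  by simp
lemma idx_mod[simp]: "r < m \<Longrightarrow> (i*m+r) mod m = (r::nat)"
  by simp
lemma idx_less: "i < n \<Longrightarrow> r < m \<Longrightarrow> i*m+r < n*(m::nat)"
proof -
  assume "i < n" "r < m"
  then have "i*m + r < i*m + m" by simp
  also have "\<dots> = Suc i * m" by simp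
  also have "\<dots> \<le> n * m" using \<open>i < n\<close> by (intro mult_right_mono) auto
  finally show ?thesis .
qed

lemma idx_cases:
  assumes "p < n*(m::nat)"
  obtains i r where "i < n" "r < m" "p = i*m+r"
proof -
  have m: "m > 0" using assms by (cases m) auto
  have "p div m < n" using assms by (simp add: div_less_iff_less_mult m)
  moreover have "p mod m < m" using m by simp
  moreover have "p = (p div m)*m + p mod m" by simp
  ultimately show ?thesis using that by blast
qed

lemma vec_eq_blocks:
  assumes "X \<in> carrier_vec (n*m)" "Y \<in> carrier_vec (n*m)"
    and "\<And>i r. i < n \<Longrightarrow> r < m \<Longrightarrow> X $ (i*m+r) = Y $ (i*m+r)"
  shows "X = Y"
proof (rule eq_vecI)
  show "dim_vec X = dim_vec Y" using assms by auto
  fix p assume "p < dim_vec Y"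
  then have "p < n*m" using assms by auto
  then obtain i r where "i < n" "r < m" "p = i*m+r" by (rule idx_cases)
  then show "X $ p = Y $ p" using assms by auto
qed

lemma sum_add_split: "(\<Sum>q<N+(m::nat). g q) = (\<Sum>q<N. g q) + (\<Sum>c<m. g (N+c))"
  by (induction m) (auto simp: add.assoc)

lemma sum_blocks: "(\<Sum>q<n*(m::nat). g q) = (\<Sum>j<n. \<Sum>c<m. g (j*m+c))"
proof (induction n)
  case 0 then show ?case by simp
next
  case (Suc n)
  have "(\<Sum>q<Suc n*m. g q) = (\<Sum>q<n*m+m. g q)" by (simp add: add.commute)
  also have "\<dots> = (\<Sum>q<n*m. g q) + (\<Sum>c<m. g (n*m+c))" by (rule sum_add_split)
  finally show ?case using Suc by simp
qed

lemma bmat_carrier[simp]: "bmat n m B \<in> carrier_mat (n*m) (n*m)"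
  unfolding bmat_def by auto

lemma bmat_mult_vec:
  assumes "y \<in> carrier_vec (n*m)" "i < n" "r < m"
  shows "(bmat n m B *\<^sub>v y) $ (i*m+r) = (\<Sum>j<n. \<Sum>c<m. B i j r c * y $ (j*m+c))"
proof -
  have il: "i*m+r < n*m" using idx_less assms by blast
  have "(bmat n m B *\<^sub>v y) $ (i*m+r) = (\<Sum>q<n*m. bmat n m B $$ (i*m+r, q) * y $ q)"
    using assms il unfolding bmat_def by (auto simp: scalar_prod_def atLeast0LessThan)
  also have "\<dots> = (\<Sum>j<n. \<Sum>c<m. bmat n m B $$ (i*m+r, j*m+c) * y $ (j*m+c))"
    by (rule sum_blocks)
  also have "\<dots> = (\<Sum>j<n. \<Sum>c<m. B i j r c * y $ (j*m+c))"
    using assms il idx_less unfolding bmat_def by (intro sum.cong refl) auto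
  finally show ?thesis .
qed

lemma smooth_vec_carrier:
  assumes "smooth_vec I n x" "s \<in> I" shows "x s \<in> carrier_vec n"
  using assms unfolding smooth_vec_def by auto

lemma smooth_vec_entry:
  assumes "smooth_vec I n x" "c < n" shows "smooth I (\<lambda>s. x s $ c)"
  using assms unfolding smooth_vec_def by auto

lemma jet_carrier[simp]: "jet n m x t \<in> carrier_vec (Suc n * m)"
  unfolding jet_def by auto

lemma jet_index:
  assumes "i \<le> n" "r < m"
  shows "jet n m x t $ (i*m+r) = (deriv ^^ i) (\<lambda>s. x s $ r) t"
proof -
  have "i*m+r < Suc n * m" using idx_less assms by (metis less_Suc_eq_le)
  then show ?thesis unfolding jet_def using assms by simp
qed

lemma mult_vec_entry:
  fixes A :: "real mat"
  assumes "A \<in> carrier_mat m m" "v \<in> carrier_vec m" "r < m"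
  shows "(A *\<^sub>v v) $ r = (\<Sum>c<m. v $ c * A $$ (r,c))"
  using assms by (auto simp: scalar_prod_def atLeast0LessThan mult.commute intro!: sum.cong)

lemma smooth_vec_mult:
  assumes I: "open I" and A: "smooth_mat_on I m m A" and x: "smooth_vec I m x"
  shows "smooth_vec I m (\<lambda>s. A s *\<^sub>v x s)"
  unfolding smooth_vec_def
proof (intro conjI allI impI ballI)
  fix t assume "t \<in> I" then show "A t *\<^sub>v x t \<in> carrier_vec m"
    using smooth_mat_carrier[OF A] x unfolding smooth_vec_def by (auto intro!: mult_mat_vec_carrier)
next
  fix r assume r: "r < m"
  have "smooth I (\<lambda>s. \<Sum>c<m. x s $ c * A s $$ (r,c))"
    using x smooth_mat_entry[OF A r] unfolding smooth_vec_def
    by (intro smooth_sum[OF I] smooth_mult[OF I]) auto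
  then show "smooth I (\<lambda>s. (A s *\<^sub>v x s) $ r)"
    by (rule smooth_local[OF I])
       (rule mult_vec_entry[symmetric, OF smooth_mat_carrier[OF A] smooth_vec_carrier[OF x] r])
qed

lemma jet_mult:
  assumes I: "open I" and t: "t \<in> I" and A: "smooth_mat_on I m m A" and x: "smooth_vec I m x"
  shows "jet n m (\<lambda>s. A s *\<^sub>v x s) t = TM n m A t *\<^sub>v jet n m x t"
proof (rule vec_eq_blocks)
  show "jet n m (\<lambda>s. A s *\<^sub>v x s) t \<in> carrier_vec (Suc n * m)" by (rule jet_carrier)
  show "TM n m A t *\<^sub>v jet n m x t \<in> carrier_vec (Suc n * m)" unfolding TM_def
    by (rule mult_mat_vec_carrier[OF bmat_carrier jet_carrier])
  fix i r assume i: "i < Suc n" and r: "r < m"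
  have xs: "\<And>c. c < m \<Longrightarrow> smooth I (\<lambda>s. x s $ c)" using x unfolding smooth_vec_def by auto
  have As: "\<And>c. c < m \<Longrightarrow> smooth I (\<lambda>s. A s $$ (r,c))" using smooth_mat_entry[OF A r] by auto
  have "jet n m (\<lambda>s. A s *\<^sub>v x s) t $ (i*m+r) = (deriv ^^ i) (\<lambda>s. (A s *\<^sub>v x s) $ r) t"
    using i r by (simp add: jet_index)
  also have "\<dots> = (deriv ^^ i) (\<lambda>s. \<Sum>c<m. x s $ c * A s $$ (r,c)) t"
    by (rule higher_deriv_local[OF I _ t])
       (rule mult_vec_entry[OF smooth_mat_carrier[OF A] smooth_vec_carrier[OF x] r])
  also have "\<dots> = (\<Sum>c<m. (deriv ^^ i) (\<lambda>s. x s $ c * A s $$ (r,c)) t)"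
    by (rule higher_deriv_sum[OF I _ t]) (auto intro!: smooth_mult[OF I] xs As)
  also have "\<dots> = (\<Sum>c<m. \<Sum>j=0..i. of_nat (i choose j) * (deriv ^^ j) (\<lambda>s. x s $ c) t * (deriv ^^ (i-j)) (\<lambda>s. A s $$ (r,c)) t)"
    by (intro sum.cong refl leibniz[OF I _ _ t] xs As) auto
  also have "\<dots> = (\<Sum>j<Suc n. \<Sum>c<m. (if j \<le> i then of_nat (i choose j) * mderiv (i-j) A t $$ (r,c) else 0) * jet n m x t $ (j*m+c))"
  proof -
    have "(\<Sum>c<m. \<Sum>j=0..i. of_nat (i choose j) * (deriv ^^ j) (\<lambda>s. x s $ c) t * (deriv ^^ (i-j)) (\<lambda>s. A s $$ (r,c)) t)
       = (\<Sum>j=0..i. \<Sum>c<m. of_nat (i choose j) * (deriv ^^ j) (\<lambda>s. x s $ c) t * (deriv ^^ (i-j)) (\<lambda>s. A s $$ (r,c)) t)"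
      by (rule sum.swap)
    also have "\<dots> = (\<Sum>j\<in>{0..i}. \<Sum>c<m. (if j \<le> i then of_nat (i choose j) * mderiv (i-j) A t $$ (r,c) else 0) * jet n m x t $ (j*m+c))"
      using i r smooth_mat_carrier[OF A t]
      by (intro sum.cong refl) (auto simp: jet_index mderiv_index)
    also have "\<dots> = (\<Sum>j<Suc n. \<Sum>c<m. (if j \<le> i then of_nat (i choose j) * mderiv (i-j) A t $$ (r,c) else 0) * jet n m x t $ (j*m+c))"
      by (rule sum.mono_neutral_left) (use i in auto)
    finally show ?thesis .
  qed
  also have "\<dots> = (TM n m A t *\<^sub>v jet n m x t) $ (i*m+r)"
    unfolding TM_def by (subst bmat_mult_vec[OF jet_carrier]) (use i r in auto)
  finally show "jet n m (\<lambda>s. A s *\<^sub>v x s) t $ (i*m+r) = (TM n m A t *\<^sub>v jet n m x t) $ (i*m+r)" .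
qed



lemma vderiv1_index: "c < m \<Longrightarrow> vderiv1 m x s $ c = deriv (\<lambda>s. x s $ c) s"
  unfolding vderiv1_def by simp

lemma smooth_vec_vderiv1:
  assumes "smooth_vec I m x" shows "smooth_vec I m (vderiv1 m x)"
  unfolding smooth_vec_def
proof (intro conjI allI impI ballI)
  fix t show "vderiv1 m x t \<in> carrier_vec m" unfolding vderiv1_def by simp
next
  fix c assume c: "c < m"
  have "(\<lambda>s. vderiv1 m x s $ c) = deriv (\<lambda>s. x s $ c)"
    using c by (auto simp: vderiv1_index)
  then show "smooth I (\<lambda>s. vderiv1 m x s $ c)"
    using smooth_deriv[OF smooth_vec_entry[OF assms c]] by simp
qed

lemma vec_last_index:
  assumes "X \<in> carrier_vec (Suc (Suc k) * m)" "j < Suc k" "c < m"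
  shows "vec_last X (Suc k * m) $ (j*m+c) = X $ (Suc j * m + c)"
proof -
  have "j*m+c < Suc k * m" using idx_less assms by blast
  moreover have "Suc (Suc k) * m - Suc k * m + (j*m+c) = Suc j * m + c" by simp
  ultimately show ?thesis using assms unfolding vec_last_def by (simp add: ac_simps)
qed

lemma vec_first_index:
  assumes "p < n"
  shows "vec_first X n $ p = X $ p"
  using assms unfolding vec_first_def by simp

lemma vec_first_block:
  assumes "j < n" "c < m"
  shows "vec_first X (n * m) $ (j*m+c) = X $ (j*m+c)"
  using idx_less[OF assms] by (rule vec_first_index)

lemma jet_vderiv1:
  assumes "smooth_vec I m x"
  shows "jet k m (vderiv1 m x) t = vec_last (jet (Suc k) m x t) (Suc k * m)"
proof (rule vec_eq_blocks)
  show "jet k m (vderiv1 m x) t \<in> carrier_vec (Suc k * m)" by (rule jet_carrier)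
  show "vec_last (jet (Suc k) m x t) (Suc k * m) \<in> carrier_vec (Suc k * m)" by simp
  fix i r assume i: "i < Suc k" and r: "r < m"
  have "jet k m (vderiv1 m x) t $ (i*m+r) = (deriv ^^ i) (\<lambda>s. vderiv1 m x s $ r) t"
    using i r by (simp add: jet_index)
  also have "(\<lambda>s. vderiv1 m x s $ r) = deriv (\<lambda>s. x s $ r)"
    using r by (auto simp: vderiv1_index)
  also have "(deriv ^^ i) (deriv (\<lambda>s. x s $ r)) t = (deriv ^^ Suc i) (\<lambda>s. x s $ r) t"
    by (simp only: funpow_deriv_Suc')
  also have "\<dots> = jet (Suc k) m x t $ (Suc i * m + r)"
    by (rule jet_index[symmetric]) (use i r in auto)
  also have "\<dots> = vec_last (jet (Suc k) m x t) (Suc k * m) $ (i*m+r)"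
    by (rule vec_last_index[symmetric, OF jet_carrier i r])
  finally show "jet k m (vderiv1 m x) t $ (i*m+r) = vec_last (jet (Suc k) m x t) (Suc k * m) $ (i*m+r)" .
qed

lemma jet_first:
  assumes "x t \<in> carrier_vec m"
  shows "vec_first (jet n m x t) m = x t"
proof (rule eq_vecI)
  fix c assume "c < dim_vec (x t)"
  then have c: "c < m" using assms by auto
  have "vec_first (jet n m x t) m $ c = jet n m x t $ (0*m+c)" using c by (simp add: vec_first_index)
  also have "\<dots> = x t $ c" using c by (subst jet_index) auto
  finally show "vec_first (jet n m x t) m $ c = x t $ c" .
qed (use assms in auto)

lemma jet_trunc:
  assumes "k \<le> n"
  shows "vec_first (jet n m x t) (Suc k * m) = jet k m x t"
proof (rule vec_eq_blocks)
  show "vec_first (jet n m x t) (Suc k * m) \<in> carrier_vec (Suc k * m)" by simp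
  show "jet k m x t \<in> carrier_vec (Suc k * m)" by (rule jet_carrier)
  fix i r assume i: "i < Suc k" and r: "r < m"
  have "i*m+r < Suc k * m" using idx_less i r by blast
  then show "vec_first (jet n m x t) (Suc k * m) $ (i*m+r) = jet k m x t $ (i*m+r)"
    using i r assms by (simp add: vec_first_index jet_index)
qed

lemma smooth_vec_add:
  assumes I: "open I" and x: "smooth_vec I m x" and y: "smooth_vec I m y"
  shows "smooth_vec I m (\<lambda>s. x s + y s)"
  unfolding smooth_vec_def
proof (intro conjI allI impI ballI)
  fix t assume "t \<in> I" then show "x t + y t \<in> carrier_vec m"
    using smooth_vec_carrier[OF x] smooth_vec_carrier[OF y] by auto
next
  fix c assume c: "c < m"
  have "smooth I (\<lambda>s. x s $ c + y s $ c)"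
    by (rule smooth_add[OF I smooth_vec_entry[OF x c] smooth_vec_entry[OF y c]])
  moreover have "\<And>s. s \<in> I \<Longrightarrow> x s $ c + y s $ c = (x s + y s) $ c"
  proof -
    fix s assume "s \<in> I"
    then have "dim_vec (y s) = m" using smooth_vec_carrier[OF y] by auto
    then show "x s $ c + y s $ c = (x s + y s) $ c" using c by simp
  qed
  ultimately show "smooth I (\<lambda>s. (x s + y s) $ c)"
    by (rule smooth_local[OF I])
qed

lemma jet_add:
  assumes I: "open I" and t: "t \<in> I" and x: "smooth_vec I m x" and y: "smooth_vec I m y"
  shows "jet n m (\<lambda>s. x s + y s) t = jet n m x t + jet n m y t"
proof (rule vec_eq_blocks)
  show "jet n m (\<lambda>s. x s + y s) t \<in> carrier_vec (Suc n * m)" by (rule jet_carrier)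
  show "jet n m x t + jet n m y t \<in> carrier_vec (Suc n * m)" by (simp add: jet_def)
  fix i r assume i: "i < Suc n" and r: "r < m"
  have "jet n m (\<lambda>s. x s + y s) t $ (i*m+r) = (deriv ^^ i) (\<lambda>s. (x s + y s) $ r) t"
    using i r by (simp add: jet_index)
  also have "\<dots> = (deriv ^^ i) (\<lambda>s. x s $ r + y s $ r) t"
  proof (rule higher_deriv_local[OF I _ t])
    fix s assume "s \<in> I"
    then have "dim_vec (y s) = m" using smooth_vec_carrier[OF y] by auto
    then show "(x s + y s) $ r = x s $ r + y s $ r" using r by simp
  qed
  also have "\<dots> = (deriv ^^ i) (\<lambda>s. x s $ r) t + (deriv ^^ i) (\<lambda>s. y s $ r) t"
    by (rule higher_deriv_add[OF I smooth_vec_entry[OF x r] smooth_vec_entry[OF y r] t])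
  also have "\<dots> = (jet n m x t + jet n m y t) $ (i*m+r)"
    using i r idx_less[OF i r] by (simp add: jet_index jet_def)
  finally show "jet n m (\<lambda>s. x s + y s) t $ (i*m+r) = (jet n m x t + jet n m y t) $ (i*m+r)" .
qed

definition Mop :: "nat \<Rightarrow> (real \<Rightarrow> real mat) \<Rightarrow> (real \<Rightarrow> real mat) \<Rightarrow> nat \<Rightarrow> real \<Rightarrow> real vec \<Rightarrow> real vec" where
  "Mop m E F k t X = calF m F k t *\<^sub>v vec_first X m + calE m E F k t *\<^sub>v vec_last X (Suc k * m)"

lemma calE_bmat: "calE m E F k t = bmat (Suc k) m (\<lambda>i j r c. if j \<le> i then
        of_nat (i choose j) * (mderiv (i-j) E t $$ (r,c))
        + (if j < i then of_nat (i choose (j+1)) * (mderiv (i-j-1) F t $$ (r,c)) else 0)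
      else 0)"
  unfolding calE_def bmat_def Let_def by simp

lemma calE_carrier[simp]: "calE m E F k t \<in> carrier_mat (Suc k * m) (Suc k * m)"
  unfolding calE_bmat by (rule bmat_carrier)

lemma calF_carrier[simp]: "calF m F k t \<in> carrier_mat (Suc k * m) m"
  unfolding calF_def by simp

lemma calF_mult_vec:
  assumes "z \<in> carrier_vec m" "i < Suc k" "r < m"
  shows "(calF m F k t *\<^sub>v z) $ (i*m+r) = (\<Sum>c<m. mderiv i F t $$ (r,c) * z $ c)"
proof -
  have "i*m+r < Suc k * m" using idx_less assms by blast
  then show ?thesis using assms unfolding calF_def
    by (auto simp: scalar_prod_def atLeast0LessThan intro!: sum.cong)
qed

lemma Mop_carrier: "Mop m E F k t X \<in> carrier_vec (Suc k * m)"
  unfolding Mop_def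
  by (rule add_carrier_vec[OF mult_mat_vec_carrier[OF calF_carrier vec_first_carrier] mult_mat_vec_carrier[OF calE_carrier vec_last_carrier]])

lemma Mop_TM:
  assumes X: "X \<in> carrier_vec (Suc (Suc k) * m)"
  shows "TM k m E t *\<^sub>v vec_last X (Suc k * m) + TM k m F t *\<^sub>v vec_first X (Suc k * m) = Mop m E F k t X"
proof (rule vec_eq_blocks)
  show "TM k m E t *\<^sub>v vec_last X (Suc k * m) + TM k m F t *\<^sub>v vec_first X (Suc k * m) \<in> carrier_vec (Suc k * m)"
    unfolding TM_def
    by (rule add_carrier_vec[OF mult_mat_vec_carrier[OF bmat_carrier vec_last_carrier] mult_mat_vec_carrier[OF bmat_carrier vec_first_carrier]])
  show "Mop m E F k t X \<in> carrier_vec (Suc k * m)" by (rule Mop_carrier)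
  fix i r assume i: "i < Suc k" and r: "r < m"
  define e where "e = (\<lambda>j c. mderiv j E t $$ (r,c))"
  define f where "f = (\<lambda>j c. mderiv j F t $$ (r,c))"
  define x where "x = (\<lambda>j c. X $ (j*m+c))"
  have il: "i*m+r < Suc k * m" using idx_less i r by blast
  have L1: "(TM k m E t *\<^sub>v vec_last X (Suc k * m)) $ (i*m+r) =
     (\<Sum>j<Suc k. \<Sum>c<m. (if j \<le> i then of_nat (i choose j) * e (i-j) c else 0) * x (Suc j) c)"
    unfolding TM_def e_def x_def
    by (subst bmat_mult_vec[OF vec_last_carrier i r]) (intro sum.cong refl; simp only: lessThan_iff vec_last_index[OF X])
  have L2: "(TM k m F t *\<^sub>v vec_first X (Suc k * m)) $ (i*m+r) =
     (\<Sum>j<Suc k. \<Sum>c<m. (if j \<le> i then of_nat (i choose j) * f (i-j) c else 0) * x j c)"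
    unfolding TM_def f_def x_def
    by (subst bmat_mult_vec[OF vec_first_carrier i r]) (intro sum.cong refl; simp only: lessThan_iff vec_first_block)
  have R1: "(calF m F k t *\<^sub>v vec_first X m) $ (i*m+r) = (\<Sum>c<m. f i c * x 0 c)"
    unfolding f_def x_def by (subst calF_mult_vec) (use i r in \<open>auto simp: vec_first_index\<close>)
  have R2: "(calE m E F k t *\<^sub>v vec_last X (Suc k * m)) $ (i*m+r) =
     (\<Sum>j<Suc k. \<Sum>c<m. (if j \<le> i then of_nat (i choose j) * e (i-j) c
        + (if j < i then of_nat (i choose (j+1)) * f (i-j-1) c else 0) else 0) * x (Suc j) c)"
    unfolding calE_bmat e_def f_def x_def
    by (subst bmat_mult_vec[OF vec_last_carrier i r]) (intro sum.cong refl; simp only: lessThan_iff vec_last_index[OF X])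
  have F1: "(\<Sum>j<Suc k. \<Sum>c<m. (if j \<le> i then of_nat (i choose j) * f (i-j) c else 0) * x j c)
      = (\<Sum>c<m. f i c * x 0 c) + (\<Sum>j<k. \<Sum>c<m. (if Suc j \<le> i then of_nat (i choose Suc j) * f (i - Suc j) c else 0) * x (Suc j) c)"
    by (subst sum.lessThan_Suc_shift) simp
  have F2: "(\<Sum>j<Suc k. \<Sum>c<m. (if j < i then of_nat (i choose (j+1)) * f (i-j-1) c else 0) * x (Suc j) c)
      = (\<Sum>j<k. \<Sum>c<m. (if Suc j \<le> i then of_nat (i choose Suc j) * f (i - Suc j) c else 0) * x (Suc j) c)"
    using i by (simp add: Suc_le_eq) (intro sum.cong refl; simp only: Suc_eq_plus1 diff_diff_left)
  have dimE: "dim_vec (TM k m E t *\<^sub>v vec_last X (Suc k * m)) = Suc k * m"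
    and dimF: "dim_vec (TM k m F t *\<^sub>v vec_first X (Suc k * m)) = Suc k * m"
    and dimcF: "dim_vec (calF m F k t *\<^sub>v vec_first X m) = Suc k * m"
    and dimcE: "dim_vec (calE m E F k t *\<^sub>v vec_last X (Suc k * m)) = Suc k * m"
    unfolding TM_def by (simp_all add: bmat_def calF_def calE_def)
  have "(TM k m E t *\<^sub>v vec_last X (Suc k * m) + TM k m F t *\<^sub>v vec_first X (Suc k * m)) $ (i*m+r)
     = (TM k m E t *\<^sub>v vec_last X (Suc k * m)) $ (i*m+r) + (TM k m F t *\<^sub>v vec_first X (Suc k * m)) $ (i*m+r)"
    by (rule index_add_vec(1)) (simp only: dimF il)
  also have "\<dots> = (\<Sum>j<Suc k. \<Sum>c<m. (if j \<le> i then of_nat (i choose j) * e (i-j) c else 0) * x (Suc j) c)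
       + ((\<Sum>c<m. f i c * x 0 c) + (\<Sum>j<Suc k. \<Sum>c<m. (if j < i then of_nat (i choose (j+1)) * f (i-j-1) c else 0) * x (Suc j) c))"
    by (simp only: L1 L2 F1 F2[symmetric])
  also have "\<dots> = (\<Sum>c<m. f i c * x 0 c) + (\<Sum>j<Suc k. \<Sum>c<m. (if j \<le> i then of_nat (i choose j) * e (i-j) c
        + (if j < i then of_nat (i choose (j+1)) * f (i-j-1) c else 0) else 0) * x (Suc j) c)"
  proof -
    have "(\<Sum>j<Suc k. \<Sum>c<m. (if j \<le> i then of_nat (i choose j) * e (i-j) c else 0) * x (Suc j) c)
       + (\<Sum>j<Suc k. \<Sum>c<m. (if j < i then of_nat (i choose (j+1)) * f (i-j-1) c else 0) * x (Suc j) c)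
       = (\<Sum>j<Suc k. \<Sum>c<m. (if j \<le> i then of_nat (i choose j) * e (i-j) c
        + (if j < i then of_nat (i choose (j+1)) * f (i-j-1) c else 0) else 0) * x (Suc j) c)"
      by (simp only: sum.distrib[symmetric]) (intro sum.cong refl; auto simp: algebra_simps)
    then show ?thesis by simp
  qed
  also have "\<dots> = Mop m E F k t X $ (i*m+r)"
    unfolding Mop_def by (subst index_add_vec(1)) (simp_all only: dimcE il R1 R2)
  finally show "(TM k m E t *\<^sub>v vec_last X (Suc k * m) + TM k m F t *\<^sub>v vec_first X (Suc k * m)) $ (i*m+r) = Mop m E F k t X $ (i*m+r)" .
qed

lemma calM:
  assumes I: "open I" and t: "t \<in> I" and E: "smooth_mat_on I m m E" and F: "smooth_mat_on I m m F"
    and x: "smooth_vec I m x"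
  shows "jet k m (\<lambda>s. E s *\<^sub>v vderiv1 m x s + F s *\<^sub>v x s) t = Mop m E F k t (jet (Suc k) m x t)"
proof -
  have x': "smooth_vec I m (vderiv1 m x)" by (rule smooth_vec_vderiv1[OF x])
  have "jet k m (\<lambda>s. E s *\<^sub>v vderiv1 m x s + F s *\<^sub>v x s) t
      = jet k m (\<lambda>s. E s *\<^sub>v vderiv1 m x s) t + jet k m (\<lambda>s. F s *\<^sub>v x s) t"
    by (rule jet_add[OF I t smooth_vec_mult[OF I E x'] smooth_vec_mult[OF I F x]])
  also have "\<dots> = TM k m E t *\<^sub>v jet k m (vderiv1 m x) t + TM k m F t *\<^sub>v jet k m x t"
    by (simp add: jet_mult[OF I t E x'] jet_mult[OF I t F x])
  also have "\<dots> = TM k m E t *\<^sub>v vec_last (jet (Suc k) m x t) (Suc k * m)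
       + TM k m F t *\<^sub>v vec_first (jet (Suc k) m x t) (Suc k * m)"
    using jet_vderiv1[OF x, of k t] jet_trunc[of k "Suc k" m x t] by simp
  also have "\<dots> = Mop m E F k t (jet (Suc k) m x t)"
    by (rule Mop_TM[OF jet_carrier])
  finally show ?thesis .
qed



lemma monom_hasderiv:
  "((\<lambda>s::real. (s - t)^(Suc q) / fact (Suc q)) has_real_derivative (s - t)^q / fact q) (at s)"
proof -
  have d: "((\<lambda>s::real. (s - t)^Suc q) has_real_derivative real (Suc q) * (s - t)^q) (at s)"
    apply (auto intro!: derivative_eq_intros)
    apply (cases q)
     apply (simp_all add: algebra_simps)
    done
  have "((\<lambda>s. (s - t)^Suc q / fact (Suc q)) has_real_derivative real (Suc q) * (s - t)^q / fact (Suc q)) (at s)"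
    using DERIV_cdivide[OF d, of "fact (Suc q)"] by simp
  moreover have "real (Suc q) * (s - t)^q / fact (Suc q) = (s - t)^q / fact q"
    by (simp add: fact_Suc del: of_nat_Suc)
  ultimately show ?thesis by simp
qed

lemma monom_differentiable:
  "(\<lambda>s::real. (s - t)^n / fact n) differentiable (at s)"
proof (cases n)
  case 0 then show ?thesis by simp
next
  case (Suc q) then show ?thesis using monom_hasderiv real_differentiable_def by blast
qed

lemma higher_deriv_monom:
  "(deriv ^^ l) (\<lambda>s::real. (s - t)^p / fact p) = (\<lambda>s. if l \<le> p then (s - t)^(p-l) / fact (p-l) else 0)"
proof (induction l)
  case 0 then show ?case by simp
next
  case (Suc l)
  have "(deriv ^^ Suc l) (\<lambda>s::real. (s - t)^p / fact p) = deriv (\<lambda>s. if l \<le> p then (s - t)^(p-l) / fact (p-l) else 0)"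
    by (simp only: funpow_deriv_Suc Suc)
  also have "\<dots> = (\<lambda>s. if Suc l \<le> p then (s - t)^(p - Suc l) / fact (p - Suc l) else 0)"
  proof (rule ext)
    fix s :: real
    show "deriv (\<lambda>s. if l \<le> p then (s - t)^(p-l) / fact (p-l) else 0) s = (if Suc l \<le> p then (s - t)^(p - Suc l) / fact (p - Suc l) else 0)"
    proof (cases "Suc l \<le> p")
      case True
      then obtain q where q: "p - l = Suc q" "p - Suc l = q" by (metis Suc_diff_le diff_Suc_Suc)
      have "((\<lambda>s. (s - t)^(Suc q) / fact (Suc q)) has_real_derivative (s - t)^q / fact q) (at s)"
        by (rule monom_hasderiv)
      then show ?thesis using True q by (simp add: DERIV_imp_deriv)
    next
      case False
      show ?thesis
      proof (cases "l \<le> p")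
        case True
        with False have "p - l = 0" by simp
        then show ?thesis using True False by simp
      next
        case False2: False
        then show ?thesis using False by simp
      qed
    qed
  qed
  finally show ?case .
qed

lemma higher_deriv_monom_at:
  "(deriv ^^ l) (\<lambda>s::real. (s - t)^p / fact p) t = (if l = p then 1 else 0)"
  unfolding higher_deriv_monom by auto

lemma smooth_monom: "smooth I (\<lambda>s::real. (s - t)^p / fact p)"
  unfolding smooth_def higher_deriv_monom
proof (intro allI ballI)
  fix k ta
  show "(\<lambda>s. if k \<le> p then (s - t) ^ (p - k) / fact (p - k) else 0) differentiable at ta"
    by (cases "k \<le> p") (simp_all add: monom_differentiable)
qed

definition pf :: "nat \<Rightarrow> nat \<Rightarrow> real \<Rightarrow> real vec \<Rightarrow> real \<Rightarrow> real vec" where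
  "pf n m t X = (\<lambda>s. vec m (\<lambda>c. \<Sum>p\<le>n. X $ (p*m+c) * ((s - t)^p / fact p)))"

lemma pf_index: "c < m \<Longrightarrow> (\<lambda>s. pf n m t X s $ c) = (\<lambda>s. \<Sum>p\<le>n. X $ (p*m+c) * ((s - t)^p / fact p))"
  unfolding pf_def by auto

lemma smooth_vec_pf:
  assumes I: "open I"
  shows "smooth_vec I m (pf n m t X)"
  unfolding smooth_vec_def
proof (intro conjI allI impI ballI)
  fix s show "pf n m t X s \<in> carrier_vec m" unfolding pf_def by simp
next
  fix c assume c: "c < m"
  show "smooth I (\<lambda>s. pf n m t X s $ c)"
    unfolding pf_index[OF c]
    by (intro smooth_sum[OF I] smooth_cmult[OF I] smooth_monom)
qed

lemma jet_pf:
  assumes I: "open I" and t: "t \<in> I" and X: "X \<in> carrier_vec (Suc n * m)"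
  shows "jet n m (pf n m t X) t = X"
proof (rule vec_eq_blocks)
  show "jet n m (pf n m t X) t \<in> carrier_vec (Suc n * m)" by (rule jet_carrier)
  show "X \<in> carrier_vec (Suc n * m)" by (rule X)
  fix i r assume i: "i < Suc n" and r: "r < m"
  have "jet n m (pf n m t X) t $ (i*m+r) = (deriv ^^ i) (\<lambda>s. pf n m t X s $ r) t"
    using i r by (simp add: jet_index)
  also have "\<dots> = (\<Sum>p\<le>n. (deriv ^^ i) (\<lambda>s. X $ (p*m+r) * ((s - t)^p / fact p)) t)"
    unfolding pf_index[OF r]
    by (rule higher_deriv_sum[OF I _ t]) (intro smooth_cmult[OF I] smooth_monom)
  also have "\<dots> = (\<Sum>p\<le>n. X $ (p*m+r) * (if i = p then 1 else 0))"
    by (intro sum.cong refl) (simp only: higher_deriv_cmult[OF I smooth_monom t] higher_deriv_monom_at)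
  also have "\<dots> = X $ (i*m+r)"
    using i by (simp add: if_distrib[of "\<lambda>x. _ * x"] cong: if_cong)
  finally show "jet n m (pf n m t X) t $ (i*m+r) = X $ (i*m+r)" .
qed

lemma jet_local:
  assumes I: "open I" and t: "t \<in> I" and eq: "\<And>s. s \<in> I \<Longrightarrow> x s = y s"
  shows "jet n m x t = jet n m y t"
  unfolding jet_def
  by (intro eq_vecI) (auto intro!: higher_deriv_local[OF I _ t] simp: eq)

lemma vderiv1_mult:
  assumes I: "open I" and s: "s \<in> I" and K: "smooth_mat_on I m m K" and x: "smooth_vec I m x"
  shows "vderiv1 m (\<lambda>s. K s *\<^sub>v x s) s = mderiv 1 K s *\<^sub>v x s + K s *\<^sub>v vderiv1 m x s"
proof (rule eq_vecI)
  have Ks: "K s \<in> carrier_mat m m" by (rule smooth_mat_carrier[OF K s])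
  have xs: "x s \<in> carrier_vec m" by (rule smooth_vec_carrier[OF x s])
  have K1: "mderiv 1 K s \<in> carrier_mat m m" using Ks by (rule mderiv_carrier)
  show "dim_vec (vderiv1 m (\<lambda>s. K s *\<^sub>v x s) s) = dim_vec (mderiv 1 K s *\<^sub>v x s + K s *\<^sub>v vderiv1 m x s)"
    using Ks K1 by (simp add: vderiv1_def)
  fix r assume "r < dim_vec (mderiv 1 K s *\<^sub>v x s + K s *\<^sub>v vderiv1 m x s)"
  then have r: "r < m" using Ks K1 by simp
  have xe: "\<And>c. c < m \<Longrightarrow> smooth I (\<lambda>s. x s $ c)" using smooth_vec_entry[OF x] by auto
  have Ke: "\<And>c. c < m \<Longrightarrow> smooth I (\<lambda>s. K s $$ (r,c))" using smooth_mat_entry[OF K r] by auto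
  have "vderiv1 m (\<lambda>s. K s *\<^sub>v x s) s $ r = (deriv ^^ 1) (\<lambda>s. (K s *\<^sub>v x s) $ r) s"
    using r by (simp add: vderiv1_index)
  also have "\<dots> = (deriv ^^ 1) (\<lambda>s. \<Sum>c<m. x s $ c * K s $$ (r,c)) s"
    by (rule higher_deriv_local[OF I _ s])
       (rule mult_vec_entry[OF smooth_mat_carrier[OF K] smooth_vec_carrier[OF x] r])
  also have "\<dots> = (\<Sum>c<m. (deriv ^^ 1) (\<lambda>s. x s $ c * K s $$ (r,c)) s)"
    by (rule higher_deriv_sum[OF I _ s]) (auto intro!: smooth_mult[OF I] xe Ke)
  also have "\<dots> = (\<Sum>c<m. x s $ c * deriv (\<lambda>s. K s $$ (r,c)) s + deriv (\<lambda>s. x s $ c) s * K s $$ (r,c))"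
    by (intro sum.cong refl, subst leibniz[OF I _ _ s]) (auto intro: xe Ke)
  also have "\<dots> = (\<Sum>c<m. x s $ c * deriv (\<lambda>s. K s $$ (r,c)) s) + (\<Sum>c<m. deriv (\<lambda>s. x s $ c) s * K s $$ (r,c))"
    by (rule sum.distrib)
  also have "\<dots> = (mderiv 1 K s *\<^sub>v x s) $ r + (K s *\<^sub>v vderiv1 m x s) $ r"
  proof -
    have e1: "(mderiv 1 K s *\<^sub>v x s) $ r = (\<Sum>c<m. x s $ c * deriv (\<lambda>s. K s $$ (r,c)) s)"
      by (subst mult_vec_entry[OF K1 xs r]) (intro sum.cong refl; simp add: mderiv_index[of K s m m r, OF Ks r])
    have vd: "vderiv1 m x s \<in> carrier_vec m" unfolding vderiv1_def by simp
    have e2: "(K s *\<^sub>v vderiv1 m x s) $ r = (\<Sum>c<m. deriv (\<lambda>s. x s $ c) s * K s $$ (r,c))"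
      by (subst mult_vec_entry[OF Ks vd r]) (intro sum.cong refl; simp add: vderiv1_index)
    show ?thesis by (simp only: e1 e2)
  qed
  also have "\<dots> = (mderiv 1 K s *\<^sub>v x s + K s *\<^sub>v vderiv1 m x s) $ r"
    using r Ks by (simp add: vderiv1_def)
  finally show "vderiv1 m (\<lambda>s. K s *\<^sub>v x s) s $ r = (mderiv 1 K s *\<^sub>v x s + K s *\<^sub>v vderiv1 m x s) $ r" .
qed



lemma vec3_ac:
  assumes "a \<in> carrier_vec n" "b \<in> carrier_vec n" "c \<in> carrier_vec n"
  shows "a + (b + c) = c + a + (b :: real vec)"
  by (rule eq_vecI) (use assms in auto)

lemma assoc3:
  assumes "A \<in> carrier_mat m m" "B \<in> carrier_mat m m" "C \<in> carrier_mat m m" "v \<in> carrier_vec m"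
  shows "A * B * C *\<^sub>v v = A *\<^sub>v (B *\<^sub>v (C *\<^sub>v (v :: real vec)))"
  by (subst assoc_mult_mat_vec[OF mult_carrier_mat[OF assms(1,2)] assms(3,4)])
     (rule assoc_mult_mat_vec[OF assms(1,2) mult_mat_vec_carrier[OF assms(3,4)]])

lemma equiv_identity:
  assumes I: "open I" and t: "t \<in> I"
    and E: "smooth_mat_on I m m E" and F: "smooth_mat_on I m m F"
    and L: "smooth_mat_on I m m L" and K: "smooth_mat_on I m m K"
    and Et: "smooth_mat_on I m m Et" and Ft: "smooth_mat_on I m m Ft"
    and eqE: "\<And>s. s \<in> I \<Longrightarrow> Et s = L s * E s * K s"
    and eqF: "\<And>s. s \<in> I \<Longrightarrow> Ft s = L s * F s * K s + L s * E s * mderiv 1 K s"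
    and X: "X \<in> carrier_vec (Suc (Suc k) * m)"
  shows "Mop m Et Ft k t X = TM k m L t *\<^sub>v Mop m E F k t (TM (Suc k) m K t *\<^sub>v X)"
proof -
  define xt where "xt = pf (Suc k) m t X"
  have sxt: "smooth_vec I m xt" unfolding xt_def by (rule smooth_vec_pf[OF I])
  have jxt: "jet (Suc k) m xt t = X" unfolding xt_def by (rule jet_pf[OF I t X])
  define x where "x = (\<lambda>s. K s *\<^sub>v xt s)"
  have sx: "smooth_vec I m x" unfolding x_def by (rule smooth_vec_mult[OF I K sxt])
  have jx: "jet (Suc k) m x t = TM (Suc k) m K t *\<^sub>v X"
    unfolding x_def jxt[symmetric] by (rule jet_mult[OF I t K sxt])
  have key: "Et s *\<^sub>v vderiv1 m xt s + Ft s *\<^sub>v xt s = L s *\<^sub>v (E s *\<^sub>v vderiv1 m x s + F s *\<^sub>v x s)"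
    if s: "s \<in> I" for s
  proof -
    have Ls: "L s \<in> carrier_mat m m" by (rule smooth_mat_carrier[OF L s])
    have Es: "E s \<in> carrier_mat m m" by (rule smooth_mat_carrier[OF E s])
    have Fs: "F s \<in> carrier_mat m m" by (rule smooth_mat_carrier[OF F s])
    have Ks: "K s \<in> carrier_mat m m" by (rule smooth_mat_carrier[OF K s])
    have K1: "mderiv 1 K s \<in> carrier_mat m m" using Ks by (rule mderiv_carrier)
    have xs: "xt s \<in> carrier_vec m" by (rule smooth_vec_carrier[OF sxt s])
    have xs': "vderiv1 m xt s \<in> carrier_vec m" unfolding vderiv1_def by simp
    have vx: "vderiv1 m x s = mderiv 1 K s *\<^sub>v xt s + K s *\<^sub>v vderiv1 m xt s"
      unfolding x_def by (rule vderiv1_mult[OF I s K sxt])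
    have 1: "(L s * E s * K s) *\<^sub>v vderiv1 m xt s = L s *\<^sub>v (E s *\<^sub>v (K s *\<^sub>v vderiv1 m xt s))"
      by (subst assoc_mult_mat_vec[OF mult_carrier_mat[OF Ls Es] Ks xs'])
         (rule assoc_mult_mat_vec[OF Ls Es mult_mat_vec_carrier[OF Ks xs']])
    have 2: "(L s * F s * K s + L s * E s * mderiv 1 K s) *\<^sub>v xt s
        = L s *\<^sub>v (F s *\<^sub>v (K s *\<^sub>v xt s)) + L s *\<^sub>v (E s *\<^sub>v (mderiv 1 K s *\<^sub>v xt s))"
      by (subst add_mult_distrib_mat_vec[OF mult_carrier_mat[OF mult_carrier_mat[OF Ls Fs] Ks] mult_carrier_mat[OF mult_carrier_mat[OF Ls Es] K1] xs])
         (simp only: assoc3[OF Ls Fs Ks xs] assoc3[OF Ls Es K1 xs])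
    have 3: "L s *\<^sub>v (E s *\<^sub>v (mderiv 1 K s *\<^sub>v xt s + K s *\<^sub>v vderiv1 m xt s) + F s *\<^sub>v (K s *\<^sub>v xt s))
       = L s *\<^sub>v (E s *\<^sub>v (mderiv 1 K s *\<^sub>v xt s)) + L s *\<^sub>v (E s *\<^sub>v (K s *\<^sub>v vderiv1 m xt s))
         + L s *\<^sub>v (F s *\<^sub>v (K s *\<^sub>v xt s))"
      using Ls Es Fs Ks K1 xs xs' by (simp add: mult_add_distrib_mat_vec)
    have "Et s *\<^sub>v vderiv1 m xt s + Ft s *\<^sub>v xt s
       = L s *\<^sub>v (E s *\<^sub>v (K s *\<^sub>v vderiv1 m xt s)) + (L s *\<^sub>v (F s *\<^sub>v (K s *\<^sub>v xt s)) + L s *\<^sub>v (E s *\<^sub>v (mderiv 1 K s *\<^sub>v xt s)))"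
      unfolding eqE[OF s] eqF[OF s] 1 2 ..
    also have "\<dots> = L s *\<^sub>v (E s *\<^sub>v (mderiv 1 K s *\<^sub>v xt s)) + L s *\<^sub>v (E s *\<^sub>v (K s *\<^sub>v vderiv1 m xt s))
         + L s *\<^sub>v (F s *\<^sub>v (K s *\<^sub>v xt s))"
      by (rule vec3_ac[where n=m]) (use Ls Es Fs Ks K1 xs xs' in \<open>auto intro!: mult_mat_vec_carrier\<close>)
    also have "\<dots> = L s *\<^sub>v (E s *\<^sub>v vderiv1 m x s + F s *\<^sub>v x s)"
      unfolding 3[symmetric] vx[symmetric] by (simp only: x_def)
    finally show ?thesis .
  qed
  have sy: "smooth_vec I m (\<lambda>s. E s *\<^sub>v vderiv1 m x s + F s *\<^sub>v x s)"
    by (intro smooth_vec_add[OF I] smooth_vec_mult[OF I] E F sx smooth_vec_vderiv1)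
  have "Mop m Et Ft k t X = jet k m (\<lambda>s. Et s *\<^sub>v vderiv1 m xt s + Ft s *\<^sub>v xt s) t"
    using calM[OF I t Et Ft sxt, of k] jxt by simp
  also have "\<dots> = jet k m (\<lambda>s. L s *\<^sub>v (E s *\<^sub>v vderiv1 m x s + F s *\<^sub>v x s)) t"
    by (rule jet_local[OF I t key])
  also have "\<dots> = TM k m L t *\<^sub>v jet k m (\<lambda>s. E s *\<^sub>v vderiv1 m x s + F s *\<^sub>v x s) t"
    by (rule jet_mult[OF I t L sy])
  also have "\<dots> = TM k m L t *\<^sub>v Mop m E F k t (jet (Suc k) m x t)"
    using calM[OF I t E F sx, of k] by simp
  finally show ?thesis using jx by simp
qed

lemma bmat_lower_inj:
  assumes y: "y \<in> carrier_vec (n*m)" and z: "bmat n m B *\<^sub>v y = 0\<^sub>v (n*m)"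
    and up: "\<And>i j r c. i < j \<Longrightarrow> j < n \<Longrightarrow> r < m \<Longrightarrow> c < m \<Longrightarrow> B i j r c = 0"
    and diag: "\<And>i v. i < n \<Longrightarrow> v \<in> carrier_vec m \<Longrightarrow> mat m m (\<lambda>(r,c). B i i r c) *\<^sub>v v = 0\<^sub>v m \<Longrightarrow> v = 0\<^sub>v m"
  shows "y = 0\<^sub>v (n*m)"
proof -
  have main: "\<forall>r<m. y $ (i*m+r) = 0" if "i < n" for i
    using that
  proof (induction i rule: less_induct)
    case (less i)
    define v where "v = vec m (\<lambda>c. y $ (i*m+c))"
    have "mat m m (\<lambda>(r,c). B i i r c) *\<^sub>v v = 0\<^sub>v m"
    proof (rule eq_vecI)
      fix r assume "r < dim_vec (0\<^sub>v m)" then have r: "r < m" by simp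
      have "(mat m m (\<lambda>(r,c). B i i r c) *\<^sub>v v) $ r = (\<Sum>c<m. B i i r c * y $ (i*m+c))"
        using r by (simp add: v_def scalar_prod_def atLeast0LessThan)
      also have "\<dots> = (\<Sum>j<n. \<Sum>c<m. B i j r c * y $ (j*m+c))"
      proof -
        have "(\<Sum>j<n. \<Sum>c<m. B i j r c * y $ (j*m+c)) = (\<Sum>c<m. B i i r c * y $ (i*m+c)) + (\<Sum>j\<in>{..<n} - {i}. \<Sum>c<m. B i j r c * y $ (j*m+c))"
          using less.prems by (subst sum.remove[of _ i]) auto
        also have "(\<Sum>j\<in>{..<n} - {i}. \<Sum>c<m. B i j r c * y $ (j*m+c)) = 0"
        proof (rule sum.neutral, rule ballI)
          fix j assume j: "j \<in> {..<n} - {i}"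
          show "(\<Sum>c<m. B i j r c * y $ (j*m+c)) = 0"
          proof (cases "j < i")
            case True
            then show ?thesis using less.IH[of j] less.prems by auto
          next
            case False
            then have "i < j" using j by auto
            then show ?thesis using up j r by auto
          qed
        qed
        finally show ?thesis by simp
      qed
      also have "\<dots> = (bmat n m B *\<^sub>v y) $ (i*m+r)" using bmat_mult_vec[OF y less.prems r] by simp
      also have "\<dots> = 0" using z idx_less[OF less.prems r] by simp
      finally show "(mat m m (\<lambda>(r,c). B i i r c) *\<^sub>v v) $ r = 0\<^sub>v m $ r" using r by simp
    qed simp
    then have "v = 0\<^sub>v m" using diag less.prems by (simp add: v_def)
    then show ?case
    proof (intro allI impI)
      fix r assume "v = 0\<^sub>v m" "r < m"
      then have "v $ r = 0" by simp
      then show "y $ (i*m+r) = 0" using \<open>r < m\<close> by (simp add: v_def)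
    qed
  qed
  show ?thesis
  proof (rule vec_eq_blocks[OF y])
    show "0\<^sub>v (n*m) \<in> carrier_vec (n*m)" by simp
    fix i r assume ir: "i < n" "r < m"
    then show "y $ (i*m+r) = 0\<^sub>v (n*m) $ (i*m+r)" using main idx_less[OF ir] by simp
  qed
qed

lemma det_inj:
  assumes A: "A \<in> carrier_mat m m" and d: "det A \<noteq> (0::real)" and v: "v \<in> carrier_vec m"
    and z: "A *\<^sub>v v = 0\<^sub>v m"
  shows "v = 0\<^sub>v m"
  using det_0_iff_vec_prod_zero[OF A] d v z by blast

lemma inj_det:
  assumes A: "A \<in> carrier_mat m m" and inj: "\<And>v. v \<in> carrier_vec m \<Longrightarrow> A *\<^sub>v v = 0\<^sub>v m \<Longrightarrow> v = 0\<^sub>v m"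
  shows "det A \<noteq> (0::real)"
  using det_0_iff_vec_prod_zero[OF A] inj by blast

lemma inv_exists:
  assumes A: "A \<in> carrier_mat n n" and d: "det A \<noteq> (0::real)"
  shows "\<exists>C. C \<in> carrier_mat n n \<and> A * C = 1\<^sub>m n \<and> C * A = 1\<^sub>m n"
proof -
  from det_non_zero_imp_unit[OF A d, unfolded Units_def, of "()"]
  obtain B where B: "B \<in> carrier_mat n n" and BA: "B * A = 1\<^sub>m n" and AB: "A * B = 1\<^sub>m n"
    by (auto simp: ring_mat_def)
  then show ?thesis by blast
qed

lemma TM_carrier[simp]: "TM n m A t \<in> carrier_mat (Suc n * m) (Suc n * m)"
  unfolding TM_def by (rule bmat_carrier)

lemma TM_inj:
  assumes A: "A t \<in> carrier_mat m m" and d: "det (A t) \<noteq> 0"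
    and y: "y \<in> carrier_vec (Suc n * m)" and z: "TM n m A t *\<^sub>v y = 0\<^sub>v (Suc n * m)"
  shows "y = 0\<^sub>v (Suc n * m)"
proof (rule bmat_lower_inj[OF y z[unfolded TM_def]])
  fix i j r c :: nat assume "i < j" then show "(if j \<le> i then of_nat (i choose j) * mderiv (i-j) A t $$ (r,c) else 0) = 0" by simp
next
  fix i v assume v: "v \<in> carrier_vec m" and z: "mat m m (\<lambda>(r,c). if i \<le> i then of_nat (i choose i) * mderiv (i-i) A t $$ (r,c) else 0) *\<^sub>v v = 0\<^sub>v m"
  have "mat m m (\<lambda>(r,c). if i \<le> i then of_nat (i choose i) * mderiv (i-i) A t $$ (r,c) else 0) = A t"
    using A by (intro eq_matI) (auto simp: mderiv_0[of A t m m, OF A])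
  then show "v = 0\<^sub>v m" using det_inj[OF A d v] z by simp
qed

lemma TM_det:
  assumes A: "A t \<in> carrier_mat m m" and d: "det (A t) \<noteq> 0"
  shows "det (TM n m A t) \<noteq> 0"
  by (rule inj_det[OF TM_carrier]) (rule TM_inj[of A t m, OF A d])



lemma rank_nullity_mat:
  fixes A :: "real mat"
  assumes A: "A \<in> carrier_mat nr nc"
  shows "mrank A + kernel.dim nc A = nc"
proof -
  interpret V: vec_space "TYPE(real)" nc .
  interpret W: vec_space "TYPE(real)" nr .
  interpret T: linear_map class_ring "module_vec TYPE(real) nc" "module_vec TYPE(real) nr" "\<lambda>v. A *\<^sub>v v"
  proof (unfold_locales)
    show "(\<lambda>v. A *\<^sub>v v) \<in> module_hom class_ring (module_vec TYPE(real) nc) (module_vec TYPE(real) nr)"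
      unfolding module_hom_def using A
      by (auto simp: module_vec_simps mult_add_distrib_mat_vec mult_mat_vec)
  qed
  have im: "T.imT = W.span (set (cols A))"
    using W.col_space_eq[OF A] A unfolding W.col_space_def mod_hom.im_def[OF T.mod_hom_axioms]
    by auto
  have ker: "T.kerT = mat_kernel A"
    unfolding mod_hom.ker_def[OF T.mod_hom_axioms] mat_kernel_def using A by auto
  have "vectorspace.dim class_ring (W.vs T.imT) + vectorspace.dim class_ring (V.vs T.kerT) = V.dim"
    by (rule T.rank_nullity) simp
  moreover have "mrank A = W.rank A" unfolding mrank_def using A by simp
  ultimately show ?thesis unfolding im ker V.dim_is_n W.rank_def by simp
qed

lemma mult_vec_uminus:
  fixes A :: "real mat"
  assumes "A \<in> carrier_mat nr nc" "v \<in> carrier_vec nc"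
  shows "A *\<^sub>v (- v) = - (A *\<^sub>v v)"
  by (rule eq_vecI) (use assms in \<open>auto simp: scalar_prod_def sum_negf\<close>)

lemma zero_append: "0\<^sub>v a @\<^sub>v 0\<^sub>v b = (0\<^sub>v (a+b) :: real vec)"
  by (rule eq_vecI) auto

lemma append_zero_iff:
  assumes "v \<in> carrier_vec a" "w \<in> carrier_vec b"
  shows "(v @\<^sub>v w = 0\<^sub>v (a+b)) \<longleftrightarrow> (v = 0\<^sub>v a \<and> w = (0\<^sub>v b :: real vec))"
  using append_vec_eq[OF assms(1) zero_carrier_vec[of a], of w "0\<^sub>v b"] zero_append by metis

lemma vec_first_append:
  assumes "v \<in> carrier_vec a" shows "vec_first (v @\<^sub>v w) a = v"
  using assms unfolding vec_first_def by (auto intro!: eq_vecI)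

lemma vec_last_append:
  assumes "v \<in> carrier_vec a" "w \<in> carrier_vec b" shows "vec_last (v @\<^sub>v w) b = w"
  using assms unfolding vec_last_def by (auto intro!: eq_vecI)

lemma mult_zero_vec_mat:
  assumes "(A :: real mat) \<in> carrier_mat nr nc" shows "A *\<^sub>v 0\<^sub>v nc = 0\<^sub>v nr"
  by (rule eq_vecI) (use assms in \<open>auto simp: scalar_prod_def\<close>)

lemma Suc_Suc_mult: "Suc (Suc k) * m = m + Suc k * m" by simp

lemma Mop_zero:
  assumes y: "y \<in> carrier_vec (Suc k * m)"
  shows "Mop m E F k t (0\<^sub>v m @\<^sub>v y) = calE m E F k t *\<^sub>v y"
proof -
  have c0: "calF m F k t *\<^sub>v 0\<^sub>v m = 0\<^sub>v (Suc k * m)" using calF_carrier by (rule mult_zero_vec_mat)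
  show ?thesis unfolding Mop_def vec_first_append[OF zero_carrier_vec] vec_last_append[OF zero_carrier_vec y] c0
    by (rule left_zero_vec[OF mult_mat_vec_carrier[OF calE_carrier y]])
qed

lemma Mop_append:
  assumes z: "z \<in> carrier_vec m" and y: "y \<in> carrier_vec (Suc k * m)"
  shows "Mop m E F k t (z @\<^sub>v y) = calF m F k t *\<^sub>v z + calE m E F k t *\<^sub>v y"
  unfolding Mop_def vec_first_append[OF z] vec_last_append[OF z y] ..

definition QK :: "nat \<Rightarrow> nat \<Rightarrow> (real \<Rightarrow> real mat) \<Rightarrow> real \<Rightarrow> real mat" where
  "QK k m K t = bmat (Suc k) m (\<lambda>i j r c. if j \<le> i then of_nat (Suc i choose Suc j) * mderiv (i-j) K t $$ (r,c) else 0)"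

lemma QK_carrier[simp]: "QK k m K t \<in> carrier_mat (Suc k * m) (Suc k * m)"
  unfolding QK_def by (rule bmat_carrier)

lemma TM_zero_append:
  assumes y: "y \<in> carrier_vec (Suc k * m)"
  shows "TM (Suc k) m K t *\<^sub>v (0\<^sub>v m @\<^sub>v y) = 0\<^sub>v m @\<^sub>v (QK k m K t *\<^sub>v y)"
proof (rule vec_eq_blocks)
  have X: "0\<^sub>v m @\<^sub>v y \<in> carrier_vec (Suc (Suc k) * m)"
    unfolding Suc_Suc_mult using y by (rule append_carrier_vec[OF zero_carrier_vec])
  show "TM (Suc k) m K t *\<^sub>v (0\<^sub>v m @\<^sub>v y) \<in> carrier_vec (Suc (Suc k) * m)"
    by (rule mult_mat_vec_carrier[OF TM_carrier X])
  show "0\<^sub>v m @\<^sub>v (QK k m K t *\<^sub>v y) \<in> carrier_vec (Suc (Suc k) * m)"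
    unfolding Suc_Suc_mult by (rule append_carrier_vec[OF zero_carrier_vec mult_mat_vec_carrier[OF QK_carrier y]])
  have Xi: "(0\<^sub>v m @\<^sub>v y) $ (j*m+c) = (if j = 0 then 0 else y $ ((j - 1)*m + c))" if "j < Suc (Suc k)" "c < m" for j c
  proof -
    have "j*m+c < m + Suc k * m" using idx_less[OF that] by simp
    moreover have "j \<noteq> 0 \<Longrightarrow> j*m+c - m = (j-1)*m+c"
      by (cases j) auto
    ultimately show ?thesis using y that by (cases j) auto
  qed
  have Xi': "(0\<^sub>v m @\<^sub>v y) $ (Suc j*m+c) = y $ (j*m + c)" if "j < Suc k" "c < m" for j c
    using Xi[of "Suc j" c] that by simp
  fix i r assume i: "i < Suc (Suc k)" and r: "r < m"
  show "(TM (Suc k) m K t *\<^sub>v (0\<^sub>v m @\<^sub>v y)) $ (i*m+r) = (0\<^sub>v m @\<^sub>v (QK k m K t *\<^sub>v y)) $ (i*m+r)"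
  proof (cases i)
    case 0
    have "(TM (Suc k) m K t *\<^sub>v (0\<^sub>v m @\<^sub>v y)) $ (i*m+r) = 
      (\<Sum>j<Suc (Suc k). \<Sum>c<m. (if j \<le> i then of_nat (i choose j) * mderiv (i-j) K t $$ (r,c) else 0) * (0\<^sub>v m @\<^sub>v y) $ (j*m+c))"
      unfolding TM_def using X i r by (subst bmat_mult_vec) auto
    also have "\<dots> = 0" using 0 by (intro sum.neutral ballI) (auto simp: Xi)
    finally show ?thesis using 0 r y by simp
  next
    case (Suc i')
    have "(TM (Suc k) m K t *\<^sub>v (0\<^sub>v m @\<^sub>v y)) $ (i*m+r) = 
      (\<Sum>j<Suc (Suc k). \<Sum>c<m. (if j \<le> i then of_nat (i choose j) * mderiv (i-j) K t $$ (r,c) else 0) * (0\<^sub>v m @\<^sub>v y) $ (j*m+c))"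
      unfolding TM_def using X i r by (subst bmat_mult_vec) auto
    also have "\<dots> = (\<Sum>j<Suc k. \<Sum>c<m. (if Suc j \<le> i then of_nat (i choose Suc j) * mderiv (i - Suc j) K t $$ (r,c) else 0) * (0\<^sub>v m @\<^sub>v y) $ (Suc j*m+c))"
      by (subst sum.lessThan_Suc_shift) (simp add: Xi)
    also have "\<dots> = (\<Sum>j<Suc k. \<Sum>c<m. (if j \<le> i' then of_nat (Suc i' choose Suc j) * mderiv (i' - j) K t $$ (r,c) else 0) * y $ (j*m+c))"
      by (intro sum.cong refl; simp only: lessThan_iff Xi' Suc_le_mono diff_Suc_Suc Suc)
    also have "\<dots> = (QK k m K t *\<^sub>v y) $ (i'*m+r)"
      unfolding QK_def using y r Suc i by (subst bmat_mult_vec) auto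
    also have "\<dots> = (0\<^sub>v m @\<^sub>v (QK k m K t *\<^sub>v y)) $ (i*m+r)"
    proof -
      have p: "i'*m+r < Suc k * m" using idx_less[of i' "Suc k" r m] i Suc r by simp
      have dq: "dim_vec (QK k m K t *\<^sub>v y) = Suc k * m" unfolding QK_def bmat_def by simp
      have "(0\<^sub>v m @\<^sub>v (QK k m K t *\<^sub>v y)) $ (m + (i'*m+r)) = (QK k m K t *\<^sub>v y) $ (i'*m+r)"
        using p dq by (subst index_append_vec(1)) auto
      then show ?thesis using Suc by (simp add: add.assoc)
    qed
    finally show ?thesis .
  qed
qed

lemma QK_inj:
  assumes K: "K t \<in> carrier_mat m m" and d: "det (K t) \<noteq> 0"
    and y: "y \<in> carrier_vec (Suc k * m)" and z: "QK k m K t *\<^sub>v y = 0\<^sub>v (Suc k * m)"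
  shows "y = 0\<^sub>v (Suc k * m)"
proof (rule bmat_lower_inj[OF y z[unfolded QK_def]])
  fix i j r c :: nat assume "i < j" then show "(if j \<le> i then of_nat (Suc i choose Suc j) * mderiv (i-j) K t $$ (r,c) else 0) = 0" by simp
next
  fix i v assume v: "v \<in> carrier_vec m" and z: "mat m m (\<lambda>(r,c). if i \<le> i then of_nat (Suc i choose Suc i) * mderiv (i-i) K t $$ (r,c) else 0) *\<^sub>v v = 0\<^sub>v m"
  have "mat m m (\<lambda>(r,c). if i \<le> i then of_nat (Suc i choose Suc i) * mderiv (i-i) K t $$ (r,c) else 0) = K t"
    using K by (intro eq_matI) (auto simp: mderiv_0[of K t m m, OF K])
  then show "v = 0\<^sub>v m" using det_inj[OF K d v] z by simp
qed

lemma TM_first: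
  assumes X: "X \<in> carrier_vec (Suc n * m)" and K: "K t \<in> carrier_mat m m"
  shows "vec_first (TM n m K t *\<^sub>v X) m = K t *\<^sub>v vec_first X m"
proof (rule eq_vecI)
  show "dim_vec (vec_first (TM n m K t *\<^sub>v X) m) = dim_vec (K t *\<^sub>v vec_first X m)" using K by simp
  fix r assume "r < dim_vec (K t *\<^sub>v vec_first X m)"
  then have r: "r < m" using K by simp
  have "vec_first (TM n m K t *\<^sub>v X) m $ r = (TM n m K t *\<^sub>v X) $ (0*m+r)" using r by (simp add: vec_first_index)
  also have "\<dots> = (\<Sum>j<Suc n. \<Sum>c<m. (if j \<le> 0 then of_nat (0 choose j) * mderiv (0-j) K t $$ (r,c) else 0) * X $ (j*m+c))"
    unfolding TM_def by (rule bmat_mult_vec[OF X _ r]) simp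
  also have "\<dots> = (\<Sum>c<m. K t $$ (r,c) * X $ c)"
    by (subst sum.lessThan_Suc_shift) (simp add: mderiv_0[of K t m m, OF K])
  also have "\<dots> = (K t *\<^sub>v vec_first X m) $ r"
    using K r by (subst mult_vec_entry[OF K _ r]) (auto simp: vec_first_index mult.commute intro!: sum.cong)
  finally show "vec_first (TM n m K t *\<^sub>v X) m $ r = (K t *\<^sub>v vec_first X m) $ r" .
qed



lemma kdim_cong: "mat_kernel A = mat_kernel B \<Longrightarrow> kernel.dim n A = kernel.dim n B"
  by simp

lemma add_eq_zero_vec:
  assumes a: "a \<in> carrier_vec n" and b: "b \<in> carrier_vec n" and ab: "a + b = 0\<^sub>v n"
  shows "a = - (b :: real vec)"
proof (rule eq_vecI)
  fix i assume "i < dim_vec (- b)"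
  then have i: "i < n" using b by simp
  have "(a + b) $ i = 0" using ab i by simp
  then show "a $ i = (- b) $ i" using a b i by simp
qed (use a b in simp)

lemma calD_Suc_mult:
  assumes X: "X \<in> carrier_vec (Suc (Suc k) * m)" and E: "E t \<in> carrier_mat m m"
  shows "calD m E F (Suc k) t *\<^sub>v X = (E t *\<^sub>v vec_first X m) @\<^sub>v Mop m E F k t X"
proof -
  have X': "X \<in> carrier_vec (m + Suc k * m)" using X by simp
  have XX: "X = vec_first X m @\<^sub>v vec_last X (Suc k * m)" using vec_first_last_append[OF X'] by simp
  have "calD m E F (Suc k) t *\<^sub>v X = four_block_mat (E t) (0\<^sub>m m (Suc k * m)) (calF m F k t) (calE m E F k t)
        *\<^sub>v (vec_first X m @\<^sub>v vec_last X (Suc k * m))"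
    unfolding calD_def using XX by simp
  also have "\<dots> = (E t *\<^sub>v vec_first X m + 0\<^sub>m m (Suc k * m) *\<^sub>v vec_last X (Suc k * m))
       @\<^sub>v (calF m F k t *\<^sub>v vec_first X m + calE m E F k t *\<^sub>v vec_last X (Suc k * m))"
    by (rule four_block_mat_mult_vec[OF E zero_carrier_mat calF_carrier calE_carrier vec_first_carrier vec_last_carrier])
  also have "E t *\<^sub>v vec_first X m + 0\<^sub>m m (Suc k * m) *\<^sub>v vec_last X (Suc k * m) = E t *\<^sub>v vec_first X m"
  proof -
    have "0\<^sub>m m (Suc k * m) *\<^sub>v vec_last X (Suc k * m) = 0\<^sub>v m" by (rule eq_vecI) auto
    then show ?thesis using E by (simp add: right_zero_vec[OF mult_mat_vec_carrier[OF E vec_first_carrier]])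
  qed
  finally show ?thesis unfolding Mop_def .
qed

context
  fixes I :: "real set" and m :: nat and E F L K Et Ft :: "real \<Rightarrow> real mat" and t :: real
  assumes I: "open I" and t: "t \<in> I"
    and sE: "smooth_mat_on I m m E" and sF: "smooth_mat_on I m m F"
    and sL: "smooth_mat_on I m m L" and sK: "smooth_mat_on I m m K"
    and sEt: "smooth_mat_on I m m Et" and sFt: "smooth_mat_on I m m Ft"
    and eqE: "\<And>s. s \<in> I \<Longrightarrow> Et s = L s * E s * K s"
    and eqF: "\<And>s. s \<in> I \<Longrightarrow> Ft s = L s * F s * K s + L s * E s * mderiv 1 K s"
    and dL: "det (L t) \<noteq> 0" and dK: "det (K t) \<noteq> 0"
begin

lemma Lt: "L t \<in> carrier_mat m m" by (rule smooth_mat_carrier[OF sL t])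
lemma Kt: "K t \<in> carrier_mat m m" by (rule smooth_mat_carrier[OF sK t])
lemma Etc: "E t \<in> carrier_mat m m" by (rule smooth_mat_carrier[OF sE t])
lemma Ett: "Et t \<in> carrier_mat m m" by (rule smooth_mat_carrier[OF sEt t])

lemma ident:
  "X \<in> carrier_vec (Suc (Suc k) * m) \<Longrightarrow> Mop m Et Ft k t X = TM k m L t *\<^sub>v Mop m E F k t (TM (Suc k) m K t *\<^sub>v X)"
  by (rule equiv_identity[OF I t sE sF sL sK sEt sFt eqE eqF])

lemma TML_zero_iff:
  assumes "v \<in> carrier_vec (Suc k * m)"
  shows "TM k m L t *\<^sub>v v = 0\<^sub>v (Suc k * m) \<longleftrightarrow> v = 0\<^sub>v (Suc k * m)"
  using TM_inj[of L t m, OF Lt dL assms] mult_zero_vec_mat[OF TM_carrier] by auto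

lemma kerE_eq: "mat_kernel (calE m Et Ft k t) = mat_kernel (calE m E F k t * QK k m K t)"
proof -
  have eq: "calE m Et Ft k t *\<^sub>v y = TM k m L t *\<^sub>v ((calE m E F k t * QK k m K t) *\<^sub>v y)"
    if y: "y \<in> carrier_vec (Suc k * m)" for y
  proof -
    have X: "0\<^sub>v m @\<^sub>v y \<in> carrier_vec (Suc (Suc k) * m)"
      unfolding Suc_Suc_mult using y by (rule append_carrier_vec[OF zero_carrier_vec])
    have "calE m Et Ft k t *\<^sub>v y = Mop m Et Ft k t (0\<^sub>v m @\<^sub>v y)" by (rule Mop_zero[OF y, symmetric])
    also have "\<dots> = TM k m L t *\<^sub>v Mop m E F k t (0\<^sub>v m @\<^sub>v (QK k m K t *\<^sub>v y))"
      unfolding ident[OF X] TM_zero_append[OF y] ..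
    also have "\<dots> = TM k m L t *\<^sub>v (calE m E F k t *\<^sub>v (QK k m K t *\<^sub>v y))"
      unfolding Mop_zero[OF mult_mat_vec_carrier[OF QK_carrier y]] ..
    also have "\<dots> = TM k m L t *\<^sub>v ((calE m E F k t * QK k m K t) *\<^sub>v y)"
      by (subst assoc_mult_mat_vec[OF calE_carrier QK_carrier y]) rule
    finally show ?thesis .
  qed
  have car: "(calE m E F k t * QK k m K t) *\<^sub>v y \<in> carrier_vec (Suc k * m)" if "y \<in> carrier_vec (Suc k * m)" for y
    using that by (rule mult_mat_vec_carrier[OF mult_carrier_mat[OF calE_carrier QK_carrier]])
  have d1: "dim_col (calE m Et Ft k t) = Suc k * m" "dim_row (calE m Et Ft k t) = Suc k * m"
    "dim_col (calE m E F k t * QK k m K t) = Suc k * m" "dim_row (calE m E F k t * QK k m K t) = Suc k * m"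
    by (simp_all add: calE_bmat QK_def bmat_def)
  show ?thesis
    unfolding set_eq_iff
  proof
    fix y
    show "y \<in> mat_kernel (calE m Et Ft k t) \<longleftrightarrow> y \<in> mat_kernel (calE m E F k t * QK k m K t)"
      unfolding mat_kernel_def d1 mem_Collect_eq
    proof (cases "y \<in> carrier_vec (Suc k * m)")
      case True
      then show "(y \<in> carrier_vec (Suc k * m) \<and> calE m Et Ft k t *\<^sub>v y = 0\<^sub>v (Suc k * m)) =
          (y \<in> carrier_vec (Suc k * m) \<and> calE m E F k t * QK k m K t *\<^sub>v y = 0\<^sub>v (Suc k * m))"
        using eq[OF True] TML_zero_iff[OF car[OF True]] by metis
    qed simp
  qed
qed

lemma QK_inv: "\<exists>C. C \<in> carrier_mat (Suc k * m) (Suc k * m) \<and> QK k m K t * C = 1\<^sub>m (Suc k * m) \<and> C * QK k m K t = 1\<^sub>m (Suc k * m)"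
  by (rule inv_exists[OF QK_carrier inj_det[OF QK_carrier]]) (rule QK_inj[of K t m, OF Kt dK])

lemma TMK_inv: "\<exists>C. C \<in> carrier_mat (Suc k * m) (Suc k * m) \<and> TM k m K t * C = 1\<^sub>m (Suc k * m) \<and> C * TM k m K t = 1\<^sub>m (Suc k * m)"
  by (rule inv_exists[OF TM_carrier TM_det[of K t m, OF Kt dK]])

lemma kdimE: "kernel.dim (Suc k * m) (calE m Et Ft k t) = kernel.dim (Suc k * m) (calE m E F k t)"
proof -
  obtain C where C: "C \<in> carrier_mat (Suc k * m) (Suc k * m)" "QK k m K t * C = 1\<^sub>m (Suc k * m)"
    using QK_inv by blast
  have "kernel.dim (Suc k * m) (calE m Et Ft k t) = kernel.dim (Suc k * m) (calE m E F k t * QK k m K t)"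
    by (rule kdim_cong[OF kerE_eq])
  also have "\<dots> = kernel.dim (Suc k * m) (calE m E F k t)"
    by (rule mat_kernel_dim_mult_eq_right[OF calE_carrier QK_carrier C])
  finally show ?thesis .
qed

lemma Linv: "\<exists>C. C \<in> carrier_mat m m \<and> L t * C = 1\<^sub>m m \<and> C * L t = 1\<^sub>m m"
  by (rule inv_exists[OF Lt dL])
lemma Kinv: "\<exists>C. C \<in> carrier_mat m m \<and> K t * C = 1\<^sub>m m \<and> C * K t = 1\<^sub>m m"
  by (rule inv_exists[OF Kt dK])

lemma L_zero_iff:
  assumes "v \<in> carrier_vec m"
  shows "L t *\<^sub>v v = 0\<^sub>v m \<longleftrightarrow> v = 0\<^sub>v m"
  using det_inj[OF Lt dL assms] mult_zero_vec_mat[OF Lt] by auto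

lemma kdimD0: "kernel.dim m (Et t) = kernel.dim m (E t)"
proof -
  obtain CL where CL: "CL \<in> carrier_mat m m" "CL * L t = 1\<^sub>m m" using Linv by blast
  obtain CK where CK: "CK \<in> carrier_mat m m" "K t * CK = 1\<^sub>m m" using Kinv by blast
  have "kernel.dim m (Et t) = kernel.dim m (L t * E t * K t)" using eqE[OF t] by simp
  also have "\<dots> = kernel.dim m (L t * E t)"
    by (rule mat_kernel_dim_mult_eq_right[OF mult_carrier_mat[OF Lt Etc] Kt CK])
  also have "\<dots> = kernel.dim m (E t)"
    by (rule kdim_cong[OF mat_kernel_mult_eq[OF Etc Lt CL]])
  finally show ?thesis .
qed

lemma kerD_eq: "mat_kernel (calD m Et Ft (Suc k) t) = mat_kernel (calD m E F (Suc k) t * TM (Suc k) m K t)"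
proof -
  have cD: "calD m E F (Suc k) t \<in> carrier_mat (Suc (Suc k) * m) (Suc (Suc k) * m)"
    unfolding calD_def using four_block_carrier_mat[OF Etc calE_carrier] by simp
  have cDt: "calD m Et Ft (Suc k) t \<in> carrier_mat (Suc (Suc k) * m) (Suc (Suc k) * m)"
    unfolding calD_def using four_block_carrier_mat[OF Ett calE_carrier] by simp
  have main: "calD m Et Ft (Suc k) t *\<^sub>v X = 0\<^sub>v (Suc (Suc k) * m) \<longleftrightarrow>
       (calD m E F (Suc k) t * TM (Suc k) m K t) *\<^sub>v X = 0\<^sub>v (Suc (Suc k) * m)"
    if X: "X \<in> carrier_vec (Suc (Suc k) * m)" for X
  proof -
    define Y where "Y = TM (Suc k) m K t *\<^sub>v X"
    have Y: "Y \<in> carrier_vec (Suc (Suc k) * m)" unfolding Y_def by (rule mult_mat_vec_carrier[OF TM_carrier X])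
    have Y0: "vec_first Y m = K t *\<^sub>v vec_first X m" unfolding Y_def by (rule TM_first[of X "Suc k" m K t, OF X Kt])
    have x0: "vec_first X m \<in> carrier_vec m" by simp
    have "calD m Et Ft (Suc k) t *\<^sub>v X = (Et t *\<^sub>v vec_first X m) @\<^sub>v Mop m Et Ft k t X"
      by (rule calD_Suc_mult[of X k m Et t Ft, OF X Ett])
    also have "\<dots> = (L t *\<^sub>v (E t *\<^sub>v vec_first Y m)) @\<^sub>v (TM k m L t *\<^sub>v Mop m E F k t Y)"
      unfolding ident[OF X] eqE[OF t] Y_def[symmetric] Y0
      by (simp add: assoc3[OF Lt Etc Kt x0])
    finally have e1: "calD m Et Ft (Suc k) t *\<^sub>v X = (L t *\<^sub>v (E t *\<^sub>v vec_first Y m)) @\<^sub>v (TM k m L t *\<^sub>v Mop m E F k t Y)" .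
    have e2: "(calD m E F (Suc k) t * TM (Suc k) m K t) *\<^sub>v X = (E t *\<^sub>v vec_first Y m) @\<^sub>v Mop m E F k t Y"
      unfolding assoc_mult_mat_vec[OF cD TM_carrier X] Y_def[symmetric] by (rule calD_Suc_mult[of Y k m E t F, OF Y Etc])
    have c1: "E t *\<^sub>v vec_first Y m \<in> carrier_vec m" by (rule mult_mat_vec_carrier[OF Etc vec_first_carrier])
    have c2: "Mop m E F k t Y \<in> carrier_vec (Suc k * m)" by (rule Mop_carrier)
    have c3: "L t *\<^sub>v (E t *\<^sub>v vec_first Y m) \<in> carrier_vec m" by (rule mult_mat_vec_carrier[OF Lt c1])
    have c4: "TM k m L t *\<^sub>v Mop m E F k t Y \<in> carrier_vec (Suc k * m)" by (rule mult_mat_vec_carrier[OF TM_carrier c2])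
    show ?thesis unfolding e1 e2 Suc_Suc_mult append_zero_iff[OF c3 c4] append_zero_iff[OF c1 c2]
      L_zero_iff[OF c1] TML_zero_iff[OF c2] ..
  qed
  have cDK: "calD m E F (Suc k) t * TM (Suc k) m K t \<in> carrier_mat (Suc (Suc k) * m) (Suc (Suc k) * m)"
    using cD by (rule mult_carrier_mat[OF _ TM_carrier])
  have dims: "dim_col (calD m Et Ft (Suc k) t) = Suc (Suc k) * m" "dim_row (calD m Et Ft (Suc k) t) = Suc (Suc k) * m"
    "dim_col (calD m E F (Suc k) t * TM (Suc k) m K t) = Suc (Suc k) * m"
    "dim_row (calD m E F (Suc k) t * TM (Suc k) m K t) = Suc (Suc k) * m"
    using carrier_matD[OF cDt] carrier_matD[OF cDK] by auto
  show ?thesis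
    unfolding set_eq_iff mat_kernel_def mem_Collect_eq dims using main by blast
qed

lemma kdimD: "kernel.dim (Suc k * m) (calD m Et Ft k t) = kernel.dim (Suc k * m) (calD m E F k t)"
proof (cases k)
  case 0 then show ?thesis using kdimD0 by (simp add: calD_def)
next
  case (Suc k')
  have cD: "calD m E F (Suc k') t \<in> carrier_mat (Suc (Suc k') * m) (Suc (Suc k') * m)"
    unfolding calD_def using four_block_carrier_mat[OF Etc calE_carrier] by simp
  obtain C where C: "C \<in> carrier_mat (Suc (Suc k') * m) (Suc (Suc k') * m)" "TM (Suc k') m K t * C = 1\<^sub>m (Suc (Suc k') * m)"
    using TMK_inv by blast
  have "kernel.dim (Suc (Suc k') * m) (calD m Et Ft (Suc k') t) = kernel.dim (Suc (Suc k') * m) (calD m E F (Suc k') t * TM (Suc k') m K t)"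
    by (rule kdim_cong[OF kerD_eq])
  also have "\<dots> = kernel.dim (Suc (Suc k') * m) (calD m E F (Suc k') t)"
    by (rule mat_kernel_dim_mult_eq_right[OF cD TM_carrier C])
  finally show ?thesis using Suc by simp
qed

lemma S_transfer:
  assumes can: "mat_kernel (Et t) \<inter> calS m Et Ft k t \<subseteq> {0\<^sub>v m}"
  shows "mat_kernel (E t) \<inter> calS m E F k t \<subseteq> {0\<^sub>v m}"
proof
  fix w assume w: "w \<in> mat_kernel (E t) \<inter> calS m E F k t"
  then have wc: "w \<in> carrier_vec m" and Ew: "E t *\<^sub>v w = 0\<^sub>v m"
    using Etc unfolding mat_kernel_def by auto
  from w obtain y where y: "y \<in> carrier_vec (Suc k * m)" and Fy: "calF m F k t *\<^sub>v w = calE m E F k t *\<^sub>v y"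
    unfolding calS_def by auto
  define X where "X = w @\<^sub>v (- y)"
  have X: "X \<in> carrier_vec (Suc (Suc k) * m)"
    unfolding X_def Suc_Suc_mult using wc y by auto
  have MX: "Mop m E F k t X = 0\<^sub>v (Suc k * m)"
  proof -
    have "Mop m E F k t X = calF m F k t *\<^sub>v w + calE m E F k t *\<^sub>v (- y)"
      unfolding X_def by (rule Mop_append[OF wc]) (use y in auto)
    also have "\<dots> = calE m E F k t *\<^sub>v y + - (calE m E F k t *\<^sub>v y)"
      unfolding Fy mult_vec_uminus[OF calE_carrier y] ..
    also have "\<dots> = 0\<^sub>v (Suc k * m)"
      by (rule uminus_r_inv_vec[OF mult_mat_vec_carrier[OF calE_carrier y]])
    finally show ?thesis .
  qed
  obtain C where C: "C \<in> carrier_mat (Suc (Suc k) * m) (Suc (Suc k) * m)" "TM (Suc k) m K t * C = 1\<^sub>m (Suc (Suc k) * m)"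
    using TMK_inv by blast
  define Xt where "Xt = C *\<^sub>v X"
  have Xt: "Xt \<in> carrier_vec (Suc (Suc k) * m)" unfolding Xt_def by (rule mult_mat_vec_carrier[OF C(1) X])
  have TXt: "TM (Suc k) m K t *\<^sub>v Xt = X"
    unfolding Xt_def assoc_mult_mat_vec[OF TM_carrier C(1) X, symmetric] C(2) using X by simp
  define z where "z = vec_first Xt m"
  have zc: "z \<in> carrier_vec m" unfolding z_def by simp
  have Kz: "K t *\<^sub>v z = w"
    unfolding z_def TM_first[of Xt "Suc k" m K t, OF Xt Kt, symmetric] TXt X_def by (rule vec_first_append[OF wc])
  have Mt: "Mop m Et Ft k t Xt = 0\<^sub>v (Suc k * m)"
    unfolding ident[OF Xt] TXt MX by (rule mult_zero_vec_mat[OF TM_carrier])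
  have "z \<in> calS m Et Ft k t"
  proof -
    define yt where "yt = vec_last Xt (Suc k * m)"
    have ytc: "yt \<in> carrier_vec (Suc k * m)" unfolding yt_def by simp
    have "calF m Ft k t *\<^sub>v z + calE m Et Ft k t *\<^sub>v yt = 0\<^sub>v (Suc k * m)"
      using Mt unfolding Mop_def z_def yt_def .
    then have "calF m Ft k t *\<^sub>v z = - (calE m Et Ft k t *\<^sub>v yt)"
      by (rule add_eq_zero_vec[OF mult_mat_vec_carrier[OF calF_carrier zc] mult_mat_vec_carrier[OF calE_carrier ytc]])
    also have "\<dots> = calE m Et Ft k t *\<^sub>v (- yt)" by (rule mult_vec_uminus[OF calE_carrier ytc, symmetric])
    finally show ?thesis unfolding calS_def using zc ytc by auto
  qed
  moreover have "z \<in> mat_kernel (Et t)"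
  proof -
    have "Et t *\<^sub>v z = L t *\<^sub>v (E t *\<^sub>v (K t *\<^sub>v z))" unfolding eqE[OF t] by (rule assoc3[OF Lt Etc Kt zc])
    also have "\<dots> = 0\<^sub>v m" unfolding Kz Ew by (rule mult_zero_vec_mat[OF Lt])
    finally show ?thesis using zc Ett unfolding mat_kernel_def by auto
  qed
  ultimately have "z = 0\<^sub>v m" using can by auto
  then show "w \<in> {0\<^sub>v m}" using Kz mult_zero_vec_mat[OF Kt] by auto
qed

end



lemma kdim_proj:
  fixes A :: "real mat" and off :: nat
  assumes A: "A \<in> carrier_mat nr nc" and off: "off + a \<le> nc"
    and inj: "\<And>y. y \<in> mat_kernel A \<Longrightarrow> (\<forall>q<a. y $ (off + q) = 0) \<Longrightarrow> y = 0\<^sub>v nc"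
    and surj: "\<And>w. w \<in> carrier_vec a \<Longrightarrow> \<exists>y \<in> mat_kernel A. \<forall>q<a. y $ (off + q) = w $ q"
  shows "kernel.dim nc A = a"
proof -
  interpret KA: kernel nr nc A by (unfold_locales) (rule A)
  interpret W: vec_space "TYPE(real)" a .
  define T where "T = (\<lambda>y :: real vec. vec a (\<lambda>q. y $ (off + q)))"
  have Tadd: "T (x + y) = T x + T y" if "x \<in> mat_kernel A" "y \<in> mat_kernel A" for x y
  proof -
    have "x \<in> carrier_vec nc" "y \<in> carrier_vec nc" using that mat_kernel_carrier A by auto
    then show ?thesis unfolding T_def using off by (auto intro!: eq_vecI)
  qed
  have Tsm: "T (c \<cdot>\<^sub>v x) = c \<cdot>\<^sub>v T x" if "x \<in> mat_kernel A" for x c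
  proof -
    have "x \<in> carrier_vec nc" using that mat_kernel_carrier A by auto
    then show ?thesis unfolding T_def using off by (auto intro!: eq_vecI)
  qed
  interpret T: linear_map class_ring KA.VK "module_vec TYPE(real) a" T
  proof (unfold_locales)
    show "T \<in> module_hom class_ring KA.VK (module_vec TYPE(real) a)"
      unfolding module_hom_def
    proof (intro CollectI conjI allI impI)
      show "T \<in> carrier KA.VK \<rightarrow> carrier (module_vec TYPE(real) a)"
        unfolding T_def by (simp add: module_vec_simps)
    next
      fix m1 m2 assume "m1 \<in> carrier KA.VK \<and> m2 \<in> carrier KA.VK"
      then show "T (m1 \<oplus>\<^bsub>KA.VK\<^esub> m2) = T m1 \<oplus>\<^bsub>module_vec TYPE(real) a\<^esub> T m2"
        using Tadd by (simp add: module_vec_simps)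
    next
      fix r :: real and m1 assume "r \<in> carrier (class_ring :: real ring) \<and> m1 \<in> carrier KA.VK"
      then show "T (r \<odot>\<^bsub>KA.VK\<^esub> m1) = r \<odot>\<^bsub>module_vec TYPE(real) a\<^esub> T m1"
        using Tsm by (simp add: module_vec_simps)
    qed
  qed
  have fd: "KA.Ker.fin_dim"
  proof -
    obtain B where "finite B" "KA.basis B" using kernel_basis_exists[OF A] by blast
    then show ?thesis unfolding KA.Ker.fin_dim_def KA.Ker.basis_def by blast
  qed
  have ij: "inj_on T (mat_kernel A)"
  proof (rule inj_onI)
    fix x y assume x: "x \<in> mat_kernel A" and y: "y \<in> mat_kernel A" and eq: "T x = T y"
    have xy: "x - y \<in> mat_kernel A"
    proof -
      have "x \<in> carrier_vec nc" "y \<in> carrier_vec nc" "A *\<^sub>v x = 0\<^sub>v nr" "A *\<^sub>v y = 0\<^sub>v nr"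
        using x y mat_kernelD[OF A] by auto
      then show ?thesis using A by (auto intro!: mat_kernelI simp: mult_minus_distrib_mat_vec)
    qed
    have "\<forall>q<a. (x - y) $ (off + q) = 0"
    proof (intro allI impI)
      fix q assume q: "q < a"
      have "T x $ q = T y $ q" using eq by simp
      then have "x $ (off + q) = y $ (off + q)" using q unfolding T_def by simp
      moreover have "x \<in> carrier_vec nc" "y \<in> carrier_vec nc" using x y mat_kernelD[OF A] by auto
      ultimately show "(x - y) $ (off + q) = 0" using q off by simp
    qed
    then have z: "x - y = 0\<^sub>v nc" using inj[OF xy] by blast
    have xc: "x \<in> carrier_vec nc" and yc: "y \<in> carrier_vec nc" using x y mat_kernelD[OF A] by auto
    show "x = y"
    proof (rule eq_vecI)
      fix i assume "i < dim_vec y"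
      then have i: "i < nc" using yc by simp
      have "(x - y) $ i = 0" using z i by simp
      then show "x $ i = y $ i" using i xc yc by simp
    qed (use xc yc in simp)
  qed
  have sj: "T ` mat_kernel A = carrier_vec a"
  proof
    show "T ` mat_kernel A \<subseteq> carrier_vec a" unfolding T_def by auto
    show "carrier_vec a \<subseteq> T ` mat_kernel A"
    proof
      fix w :: "real vec" assume w: "w \<in> carrier_vec a"
      obtain y where y: "y \<in> mat_kernel A" "\<forall>q<a. y $ (off + q) = w $ q" using surj[OF w] by blast
      have "T y = w" unfolding T_def using y w by (auto intro!: eq_vecI)
      then show "w \<in> T ` mat_kernel A" using y by blast
    qed
  qed
  have "KA.Ker.dim = W.dim"
    by (rule T.dim_eq[OF fd]) (use ij sj in simp_all)
  then show ?thesis using W.dim_is_n by simp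
qed


lemma U_zero:
  fixes x :: "nat \<Rightarrow> nat \<Rightarrow> real"
  assumes x0: "\<forall>c<d. x 0 c = 0"
    and eq: "\<forall>i\<le>n. \<forall>r<d. x (Suc i) r = (\<Sum>j\<le>i. \<Sum>c<d. \<alpha> i j r c * x j c)"
  shows "\<forall>i\<le>Suc n. \<forall>r<d. x i r = 0"
proof -
  have "\<forall>r<d. x i r = 0" if "i \<le> Suc n" for i
    using that
  proof (induction i rule: less_induct)
    case (less i)
    show ?case
    proof (cases i)
      case 0 then show ?thesis using x0 by simp
    next
      case (Suc i')
      show ?thesis
      proof (intro allI impI)
        fix r assume r: "r < d"
        have "x (Suc i') r = (\<Sum>j\<le>i'. \<Sum>c<d. \<alpha> i' j r c * x j c)"
          using eq less.prems Suc r by auto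
        also have "\<dots> = 0"
          using less.IH less.prems Suc by (intro sum.neutral ballI) auto
        finally show "x i r = 0" using Suc by simp
      qed
    qed
  qed
  then show ?thesis by blast
qed

lemma V1:
  fixes V :: "nat \<Rightarrow> nat \<Rightarrow> real"
  assumes tri: "\<And>i j q c. c \<le> q \<Longrightarrow> \<beta> i j q c = 0"
    and eq: "\<forall>i\<le>n. \<forall>q<a. V q i = (\<Sum>j\<le>i. \<Sum>c<a. \<beta> i j q c * V c (Suc j))"
    and top: "\<forall>q<a. V q (Suc n) = 0"
  shows "\<forall>q<a. \<forall>i\<le>Suc n. V q i = 0"
proof -
  have P: "\<forall>q<a. a - q \<le> s \<longrightarrow> (\<forall>i\<le>Suc n. V q i = 0)" for s
  proof (induction s)
    case 0 then show ?case by auto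
  next
    case (Suc s)
    show ?case
    proof (intro allI impI)
      fix q i assume q: "q < a" and qs: "a - q \<le> Suc s" and i: "i \<le> Suc n"
      show "V q i = 0"
      proof (cases "i = Suc n")
        case True then show ?thesis using top q by simp
      next
        case False
        then have i': "i \<le> n" using i by simp
        have "V q i = (\<Sum>j\<le>i. \<Sum>c<a. \<beta> i j q c * V c (Suc j))" using eq i' q by blast
        also have "\<dots> = 0"
        proof (intro sum.neutral ballI)
          fix j c assume j: "j \<in> {..i}" and c: "c \<in> {..<a}"
          show "\<beta> i j q c * V c (Suc j) = 0"
          proof (cases "c \<le> q")
            case True then show ?thesis using tri by simp
          next
            case False
            then have "a - c \<le> s" using qs c by auto
            moreover have "Suc j \<le> Suc n" using j i' by simp
            ultimately show ?thesis using Suc.IH c by auto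
          qed
        qed
        finally show ?thesis .
      qed
    qed
  qed
  show ?thesis using P[of a] by auto
qed

lemma V2:
  fixes V :: "nat \<Rightarrow> nat \<Rightarrow> real"
  assumes tri: "\<And>i j q c. c \<le> q \<Longrightarrow> \<beta> i j q c = 0"
    and eq: "\<forall>i\<le>n. \<forall>q<a. V q i = (\<Sum>j\<le>i. \<Sum>c<a. \<beta> i j q c * V c (Suc j))"
  shows "\<forall>q<a. \<forall>i. i + (a - 1 - q) \<le> n \<longrightarrow> V q i = 0"
proof -
  have P: "\<forall>q<a. a - q \<le> s \<longrightarrow> (\<forall>i. i + (a - 1 - q) \<le> n \<longrightarrow> V q i = 0)" for s
  proof (induction s)
    case 0 then show ?case by auto
  next
    case (Suc s)
    show ?case
    proof (intro allI impI)
      fix q i assume q: "q < a" and qs: "a - q \<le> Suc s" and i: "i + (a - 1 - q) \<le> n"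
      have i': "i \<le> n" using i by simp
      have "V q i = (\<Sum>j\<le>i. \<Sum>c<a. \<beta> i j q c * V c (Suc j))" using eq i' q by blast
      also have "\<dots> = 0"
      proof (intro sum.neutral ballI)
        fix j c assume j: "j \<in> {..i}" and c: "c \<in> {..<a}"
        show "\<beta> i j q c * V c (Suc j) = 0"
        proof (cases "c \<le> q")
          case True then show ?thesis using tri by simp
        next
          case False
          then have "a - c \<le> s" using qs c by auto
          moreover have "Suc j + (a - 1 - c) \<le> n" using j i c False by auto
          ultimately show ?thesis using Suc.IH c by auto
        qed
      qed
      finally show "V q i = 0" .
    qed
  qed
  show ?thesis using P[of a] by auto
qed

primrec Vs :: "nat \<Rightarrow> nat \<Rightarrow> (nat \<Rightarrow> nat \<Rightarrow> nat \<Rightarrow> nat \<Rightarrow> real) \<Rightarrow> (nat \<Rightarrow> real) \<Rightarrow> nat \<Rightarrow> nat \<Rightarrow> nat \<Rightarrow> real" where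
  "Vs a n \<beta> w 0 q i = 0"
| "Vs a n \<beta> w (Suc s) q i = (if s < a \<and> q = a - Suc s then
      (if i = Suc n then w q else (\<Sum>j\<le>i. \<Sum>c<a. \<beta> i j q c * Vs a n \<beta> w s c (Suc j)))
    else Vs a n \<beta> w s q i)"

lemma Vs_stable:
  assumes "s \<le> s'" "a - s \<le> q" "q < a"
  shows "Vs a n \<beta> w s' q i = Vs a n \<beta> w s q i"
  using assms(1)
proof (induction s' rule: dec_induct)
  case base then show ?case by simp
next
  case (step s')
  have nc: "\<not> (s' < a \<and> q = a - Suc s')" using step.hyps assms(2,3) by auto
  show ?case by (simp only: Vs.simps(2) nc if_False step.IH)
qed

lemma V3:
  assumes tri: "\<And>i j q c. c \<le> q \<Longrightarrow> \<beta> i j q c = 0"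
  shows "\<exists>V :: nat \<Rightarrow> nat \<Rightarrow> real. (\<forall>i\<le>n. \<forall>q<a. V q i = (\<Sum>j\<le>i. \<Sum>c<a. \<beta> i j q c * V c (Suc j)))
            \<and> (\<forall>q<a. V q (Suc n) = w q)"
proof -
  define V where "V = Vs a n \<beta> w a"
  have VV: "V q i = Vs a n \<beta> w (a - q) q i" if "q < a" for q i
    unfolding V_def by (rule Vs_stable) (use that in simp_all)
  have def: "Vs a n \<beta> w (a - q) q i = (if i = Suc n then w q else (\<Sum>j\<le>i. \<Sum>c<a. \<beta> i j q c * Vs a n \<beta> w (a - q - 1) c (Suc j)))"
    if "q < a" for q i
  proof -
    define s0 where "s0 = a - q - 1"
    have h: "a - q = Suc s0" using that unfolding s0_def by simp
    have c: "s0 < a \<and> q = a - Suc s0" using that unfolding s0_def by auto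
    have "Vs a n \<beta> w (a - q) q i = Vs a n \<beta> w (Suc s0) q i" by (simp only: h)
    also have "\<dots> = (if i = Suc n then w q else (\<Sum>j\<le>i. \<Sum>c<a. \<beta> i j q c * Vs a n \<beta> w s0 c (Suc j)))"
      by (simp only: Vs.simps(2) c simp_thms if_True)
    finally show ?thesis unfolding s0_def .
  qed
  have eq: "\<forall>i\<le>n. \<forall>q<a. V q i = (\<Sum>j\<le>i. \<Sum>c<a. \<beta> i j q c * V c (Suc j))"
  proof (intro allI impI)
    fix i q assume i: "i \<le> n" and q: "q < a"
    have "V q i = (\<Sum>j\<le>i. \<Sum>c<a. \<beta> i j q c * Vs a n \<beta> w (a - q - 1) c (Suc j))"
      using VV[OF q] def[OF q] i by simp
    also have "\<dots> = (\<Sum>j\<le>i. \<Sum>c<a. \<beta> i j q c * V c (Suc j))"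
    proof (intro sum.cong refl)
      fix j c assume c: "c \<in> {..<a}"
      show "\<beta> i j q c * Vs a n \<beta> w (a - q - 1) c (Suc j) = \<beta> i j q c * V c (Suc j)"
      proof (cases "c \<le> q")
        case True then show ?thesis using tri by simp
      next
        case False
        have "Vs a n \<beta> w (a - q - 1) c (Suc j) = Vs a n \<beta> w a c (Suc j)"
          by (rule Vs_stable[symmetric]) (use False c in auto)
        then show ?thesis unfolding V_def by simp
      qed
    qed
    finally show "V q i = (\<Sum>j\<le>i. \<Sum>c<a. \<beta> i j q c * V c (Suc j))" .
  qed
  moreover have "\<forall>q<a. V q (Suc n) = w q"
    using VV def by simp
  ultimately show ?thesis by blast
qed



lemma higher_deriv_const_gen: "(deriv ^^ j) (\<lambda>x::real. c) t = (if j = 0 then c else 0)"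
  by (cases j) (simp_all only: higher_deriv_const, simp_all)

lemma sum2_delta:
  fixes i N r M :: nat
  assumes "i < N" "r < M"
  shows "(\<Sum>j<N. \<Sum>c<M. (if j = i \<and> c = r then v else 0)) = (v::real)"
proof -
  have "(\<Sum>j<N. \<Sum>c<M. (if j = i \<and> c = r then v else 0)) = (\<Sum>j<N. if j = i then (\<Sum>c<M. if c = r then v else 0) else 0)"
    by (intro sum.cong refl) auto
  also have "\<dots> = v" using assms by (simp add: sum.delta)
  finally show ?thesis .
qed

lemma sum_upto_restrict:
  fixes i n :: nat
  assumes "i < Suc n"
  shows "(\<Sum>j<Suc n. if j \<le> i then f j else (0::real)) = (\<Sum>j\<le>i. f j)"
proof -
  have "(\<Sum>j<Suc n. if j \<le> i then f j else 0) = (\<Sum>j\<in>{..i}. if j \<le> i then f j else 0)"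
    by (rule sum.mono_neutral_right) (use assms in auto)
  also have "\<dots> = (\<Sum>j\<le>i. f j)" by simp
  finally show ?thesis .
qed

lemma Mop_entry:
  assumes X: "X \<in> carrier_vec (Suc (Suc k) * m)" and i: "i < Suc k" and r: "r < m"
  shows "Mop m E F k t X $ (i*m+r) =
     (\<Sum>j<Suc k. \<Sum>c<m. (if j \<le> i then of_nat (i choose j) * mderiv (i-j) E t $$ (r,c) else 0) * X $ (Suc j*m+c))
   + (\<Sum>j<Suc k. \<Sum>c<m. (if j \<le> i then of_nat (i choose j) * mderiv (i-j) F t $$ (r,c) else 0) * X $ (j*m+c))"
proof -
  have il: "i*m+r < Suc k * m" using idx_less[OF i r] .
  have L1: "(TM k m E t *\<^sub>v vec_last X (Suc k * m)) $ (i*m+r) =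
     (\<Sum>j<Suc k. \<Sum>c<m. (if j \<le> i then of_nat (i choose j) * mderiv (i-j) E t $$ (r,c) else 0) * X $ (Suc j*m+c))"
    unfolding TM_def
    by (subst bmat_mult_vec[OF vec_last_carrier i r]) (intro sum.cong refl; simp only: lessThan_iff vec_last_index[OF X])
  have L2: "(TM k m F t *\<^sub>v vec_first X (Suc k * m)) $ (i*m+r) =
     (\<Sum>j<Suc k. \<Sum>c<m. (if j \<le> i then of_nat (i choose j) * mderiv (i-j) F t $$ (r,c) else 0) * X $ (j*m+c))"
    unfolding TM_def
    by (subst bmat_mult_vec[OF vec_first_carrier i r]) (intro sum.cong refl; simp only: lessThan_iff vec_first_block)
  have dimF: "dim_vec (TM k m F t *\<^sub>v vec_first X (Suc k * m)) = Suc k * m"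
    unfolding TM_def by (simp add: bmat_def)
  have "Mop m E F k t X $ (i*m+r) = (TM k m E t *\<^sub>v vec_last X (Suc k * m) + TM k m F t *\<^sub>v vec_first X (Suc k * m)) $ (i*m+r)"
    by (simp only: Mop_TM[OF X])
  also have "\<dots> = (TM k m E t *\<^sub>v vec_last X (Suc k * m)) $ (i*m+r) + (TM k m F t *\<^sub>v vec_first X (Suc k * m)) $ (i*m+r)"
    by (rule index_add_vec(1)) (simp only: dimF il)
  finally show ?thesis unfolding L1 L2 .
qed

lemma zero_append_index:
  assumes y: "y \<in> carrier_vec (Suc k * m)" and j: "j < Suc (Suc k)" and c: "c < m"
  shows "(0\<^sub>v m @\<^sub>v y) $ (j*m+c) = (if j = 0 then 0 else y $ ((j - 1)*m + c))"
proof -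
  have "j*m+c < m + Suc k * m" using idx_less[OF j c] by simp
  moreover have "j \<noteq> 0 \<Longrightarrow> j*m+c - m = (j-1)*m+c"
    by (cases j) auto
  ultimately show ?thesis using y j c by (cases j) auto
qed

lemma append_index_first:
  assumes z: "z \<in> carrier_vec m" and y: "y \<in> carrier_vec n" and c: "c < m"
  shows "(z @\<^sub>v y) $ c = z $ c"
  using assms by simp

lemma append_index_last:
  assumes z: "z \<in> carrier_vec m" and y: "y \<in> carrier_vec n" and p: "p < n"
  shows "(z @\<^sub>v y) $ (m + p) = y $ p"
  using assms by simp

locale canon =
  fixes I :: "real set" and m d a :: nat and \<Omega> N :: "real \<Rightarrow> real mat" and t :: real
  assumes I: "open I" and t: "t \<in> I" and ma: "m = d + a"
    and smO: "smooth_mat_on I d d \<Omega>" and smN: "smooth_mat_on I a a N"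
    and Nsut: "\<forall>t\<in>I. strictly_upper_triangular a (N t)"
begin

definition "Ec = (\<lambda>s. four_block_mat (1\<^sub>m d) (0\<^sub>m d a) (0\<^sub>m a d) (N s))"
definition "Fc = (\<lambda>s. four_block_mat (\<Omega> s) (0\<^sub>m d a) (0\<^sub>m a d) (1\<^sub>m a))"

lemma Ec_index:
  assumes s: "s \<in> I" and r: "r < m" and c: "c < m"
  shows "Ec s $$ (r,c) = (if r < d \<and> c < d then (if r = c then 1 else 0)
     else if d \<le> r \<and> d \<le> c then N s $$ (r - d, c - d) else 0)"
proof -
  have "N s \<in> carrier_mat a a" using smooth_mat_carrier[OF smN s] .
  then show ?thesis unfolding Ec_def using r c ma by auto
qed

lemma Fc_index:
  assumes s: "s \<in> I" and r: "r < m" and c: "c < m"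
  shows "Fc s $$ (r,c) = (if r < d \<and> c < d then \<Omega> s $$ (r,c)
     else if d \<le> r \<and> d \<le> c then (if r = c then 1 else 0) else 0)"
proof -
  have "\<Omega> s \<in> carrier_mat d d" using smooth_mat_carrier[OF smO s] .
  then show ?thesis unfolding Fc_def using r c ma by auto
qed

lemma Ec_carrier: "s \<in> I \<Longrightarrow> Ec s \<in> carrier_mat m m"
  unfolding Ec_def ma using smooth_mat_carrier[OF smN] by (auto intro!: four_block_carrier_mat)

lemma Fc_carrier: "s \<in> I \<Longrightarrow> Fc s \<in> carrier_mat m m"
  unfolding Fc_def ma using smooth_mat_carrier[OF smO] by (auto intro!: four_block_carrier_mat)

lemma smooth_Ec: "smooth_mat_on I m m Ec"
  unfolding smooth_mat_on_def
proof (intro conjI ballI allI impI)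
  fix s assume "s \<in> I" then show "Ec s \<in> carrier_mat m m" by (rule Ec_carrier)
next
  fix r c k s assume r: "r < m" and c: "c < m" and s: "s \<in> I"
  define g where "g = (\<lambda>s. if r < d \<and> c < d then (if r = c then 1 else 0)
     else if d \<le> r \<and> d \<le> c then N s $$ (r - d, c - d) else (0::real))"
  have sg: "smooth I g"
  proof (cases "d \<le> r \<and> d \<le> c")
    case True
    then have "g = (\<lambda>s. N s $$ (r - d, c - d))" unfolding g_def by auto
    then show ?thesis using smooth_mat_entry[OF smN, of "r-d" "c-d"] True r c ma by auto
  next
    case False
    then have "g = (\<lambda>s. if r < d \<and> c < d then (if r = c then 1 else 0) else 0)" unfolding g_def by auto
    then show ?thesis by (simp add: smooth_const)
  qed
  have "smooth I (\<lambda>s. Ec s $$ (r,c))"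
    by (rule smooth_local[OF I sg]) (simp add: Ec_index[OF _ r c] g_def)
  then show "(deriv ^^ k) (\<lambda>s. Ec s $$ (r,c)) differentiable at s" using s unfolding smooth_def by blast
qed

lemma smooth_Fc: "smooth_mat_on I m m Fc"
  unfolding smooth_mat_on_def
proof (intro conjI ballI allI impI)
  fix s assume "s \<in> I" then show "Fc s \<in> carrier_mat m m" by (rule Fc_carrier)
next
  fix r c k s assume r: "r < m" and c: "c < m" and s: "s \<in> I"
  define g where "g = (\<lambda>s. if r < d \<and> c < d then \<Omega> s $$ (r,c)
     else if d \<le> r \<and> d \<le> c then (if r = c then 1 else 0) else (0::real))"
  have sg: "smooth I g"
  proof (cases "r < d \<and> c < d")
    case True
    then have "g = (\<lambda>s. \<Omega> s $$ (r, c))" unfolding g_def by auto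
    then show ?thesis using smooth_mat_entry[OF smO, of r c] True by auto
  next
    case False
    then have "g = (\<lambda>s. if d \<le> r \<and> d \<le> c then (if r = c then 1 else 0) else 0)" unfolding g_def by auto
    then show ?thesis by (simp add: smooth_const)
  qed
  have "smooth I (\<lambda>s. Fc s $$ (r,c))"
    by (rule smooth_local[OF I sg]) (simp add: Fc_index[OF _ r c] g_def)
  then show "(deriv ^^ k) (\<lambda>s. Fc s $$ (r,c)) differentiable at s" using s unfolding smooth_def by blast
qed

lemma Ec_deriv:
  assumes r: "r < m" and c: "c < m"
  shows "mderiv j Ec t $$ (r,c) = (if r < d \<and> c < d then (if j = 0 \<and> r = c then 1 else 0)
     else if d \<le> r \<and> d \<le> c then mderiv j N t $$ (r - d, c - d) else 0)"
proof -
  define g where "g = (\<lambda>s. if r < d \<and> c < d then (if r = c then 1 else 0)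
     else if d \<le> r \<and> d \<le> c then N s $$ (r - d, c - d) else (0::real))"
  have "mderiv j Ec t $$ (r,c) = (deriv ^^ j) (\<lambda>s. Ec s $$ (r,c)) t"
    by (rule mderiv_index[of Ec t m m r c j, OF Ec_carrier[OF t] r c])
  also have "\<dots> = (deriv ^^ j) g t"
    by (rule higher_deriv_local[OF I _ t]) (simp add: Ec_index[OF _ r c] g_def)
  also have "\<dots> = (if r < d \<and> c < d then (if j = 0 \<and> r = c then 1 else 0)
     else if d \<le> r \<and> d \<le> c then mderiv j N t $$ (r - d, c - d) else 0)"
  proof (cases "d \<le> r \<and> d \<le> c")
    case True
    then have "g = (\<lambda>s. N s $$ (r - d, c - d))" unfolding g_def by auto
    moreover have "r - d < a" "c - d < a" using True r c ma by auto
    ultimately show ?thesis using True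
      by (simp add: mderiv_index[of N t a a, OF smooth_mat_carrier[OF smN t]])
  next
    case False
    then show ?thesis unfolding g_def by (auto simp: higher_deriv_const_gen)
  qed
  finally show ?thesis .
qed

lemma Fc_deriv:
  assumes r: "r < m" and c: "c < m"
  shows "mderiv j Fc t $$ (r,c) = (if r < d \<and> c < d then mderiv j \<Omega> t $$ (r,c)
     else if d \<le> r \<and> d \<le> c then (if j = 0 \<and> r = c then 1 else 0) else 0)"
proof -
  define g where "g = (\<lambda>s. if r < d \<and> c < d then \<Omega> s $$ (r,c)
     else if d \<le> r \<and> d \<le> c then (if r = c then 1 else 0) else (0::real))"
  have "mderiv j Fc t $$ (r,c) = (deriv ^^ j) (\<lambda>s. Fc s $$ (r,c)) t"
    by (rule mderiv_index[of Fc t m m r c j, OF Fc_carrier[OF t] r c])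
  also have "\<dots> = (deriv ^^ j) g t"
    by (rule higher_deriv_local[OF I _ t]) (simp add: Fc_index[OF _ r c] g_def)
  also have "\<dots> = (if r < d \<and> c < d then mderiv j \<Omega> t $$ (r,c)
     else if d \<le> r \<and> d \<le> c then (if j = 0 \<and> r = c then 1 else 0) else 0)"
  proof (cases "r < d \<and> c < d")
    case True
    then have "g = (\<lambda>s. \<Omega> s $$ (r, c))" unfolding g_def by auto
    then show ?thesis using True
      by (simp add: mderiv_index[of \<Omega> t d d, OF smooth_mat_carrier[OF smO t]])
  next
    case False
    then show ?thesis unfolding g_def by (auto simp: higher_deriv_const_gen)
  qed
  finally show ?thesis .
qed

lemma split_m: "(\<Sum>c<m. g c) = (\<Sum>c<d. g c) + (\<Sum>c<a. g (d + c))"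
  unfolding ma by (rule sum_add_split)

lemma canon_Mop_u:
  assumes X: "X \<in> carrier_vec (Suc (Suc n) * m)" and i: "i < Suc n" and r: "r < d"
  shows "Mop m Ec Fc n t X $ (i*m+r) = X $ (Suc i*m+r)
     + (\<Sum>j\<le>i. \<Sum>c<d. of_nat (i choose j) * mderiv (i-j) \<Omega> t $$ (r,c) * X $ (j*m+c))"
proof -
  have rm: "r < m" using r ma by simp
  have S1: "(\<Sum>j<Suc n. \<Sum>c<m. (if j \<le> i then of_nat (i choose j) * mderiv (i-j) Ec t $$ (r,c) else 0) * X $ (Suc j*m+c))
      = X $ (Suc i*m+r)"
  proof -
    have "(\<Sum>j<Suc n. \<Sum>c<m. (if j \<le> i then of_nat (i choose j) * mderiv (i-j) Ec t $$ (r,c) else 0) * X $ (Suc j*m+c))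
      = (\<Sum>j<Suc n. \<Sum>c<m. (if j = i \<and> c = r then X $ (Suc i*m+r) else 0))"
    proof (intro sum.cong refl)
      fix j c assume j: "j \<in> {..<Suc n}" and c: "c \<in> {..<m}"
      show "(if j \<le> i then of_nat (i choose j) * mderiv (i-j) Ec t $$ (r,c) else 0) * X $ (Suc j*m+c)
          = (if j = i \<and> c = r then X $ (Suc i*m+r) else 0)"
        using c r rm by (auto simp: Ec_deriv)
    qed
    also have "\<dots> = X $ (Suc i*m+r)" by (rule sum2_delta[OF i rm])
    finally show ?thesis .
  qed
  have S2: "(\<Sum>j<Suc n. \<Sum>c<m. (if j \<le> i then of_nat (i choose j) * mderiv (i-j) Fc t $$ (r,c) else 0) * X $ (j*m+c))
      = (\<Sum>j\<le>i. \<Sum>c<d. of_nat (i choose j) * mderiv (i-j) \<Omega> t $$ (r,c) * X $ (j*m+c))"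
  proof -
    have "(\<Sum>j<Suc n. \<Sum>c<m. (if j \<le> i then of_nat (i choose j) * mderiv (i-j) Fc t $$ (r,c) else 0) * X $ (j*m+c))
      = (\<Sum>j<Suc n. if j \<le> i then (\<Sum>c<d. of_nat (i choose j) * mderiv (i-j) \<Omega> t $$ (r,c) * X $ (j*m+c)) else 0)"
    proof (intro sum.cong refl)
      fix j assume j: "j \<in> {..<Suc n}"
      have "(\<Sum>c<m. (if j \<le> i then of_nat (i choose j) * mderiv (i-j) Fc t $$ (r,c) else 0) * X $ (j*m+c))
        = (\<Sum>c<d. (if j \<le> i then of_nat (i choose j) * mderiv (i-j) Fc t $$ (r,c) else 0) * X $ (j*m+c))
        + (\<Sum>c<a. (if j \<le> i then of_nat (i choose j) * mderiv (i-j) Fc t $$ (r,d+c) else 0) * X $ (j*m+(d+c)))"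
        by (rule split_m)
      also have "(\<Sum>c<a. (if j \<le> i then of_nat (i choose j) * mderiv (i-j) Fc t $$ (r,d+c) else 0) * X $ (j*m+(d+c))) = 0"
        using r ma by (intro sum.neutral ballI) (simp add: Fc_deriv)
      also have "(\<Sum>c<d. (if j \<le> i then of_nat (i choose j) * mderiv (i-j) Fc t $$ (r,c) else 0) * X $ (j*m+c))
        = (if j \<le> i then (\<Sum>c<d. of_nat (i choose j) * mderiv (i-j) \<Omega> t $$ (r,c) * X $ (j*m+c)) else 0)"
        using r ma by (auto simp: Fc_deriv intro!: sum.cong)
      finally show "(\<Sum>c<m. (if j \<le> i then of_nat (i choose j) * mderiv (i-j) Fc t $$ (r,c) else 0) * X $ (j*m+c))
        = (if j \<le> i then (\<Sum>c<d. of_nat (i choose j) * mderiv (i-j) \<Omega> t $$ (r,c) * X $ (j*m+c)) else 0)" by simp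
    qed
    also have "\<dots> = (\<Sum>j\<le>i. \<Sum>c<d. of_nat (i choose j) * mderiv (i-j) \<Omega> t $$ (r,c) * X $ (j*m+c))"
      by (rule sum_upto_restrict[OF i])
    finally show ?thesis .
  qed
  show ?thesis unfolding Mop_entry[OF X i rm] S1 S2 ..
qed

lemma canon_Mop_v:
  assumes X: "X \<in> carrier_vec (Suc (Suc n) * m)" and i: "i < Suc n" and q: "q < a"
  shows "Mop m Ec Fc n t X $ (i*m+(d+q)) = X $ (i*m+(d+q))
     + (\<Sum>j\<le>i. \<Sum>c<a. of_nat (i choose j) * mderiv (i-j) N t $$ (q,c) * X $ (Suc j*m+(d+c)))"
proof -
  have rm: "d + q < m" using q ma by simp
  have S2: "(\<Sum>j<Suc n. \<Sum>c<m. (if j \<le> i then of_nat (i choose j) * mderiv (i-j) Fc t $$ (d+q,c) else 0) * X $ (j*m+c))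
      = X $ (i*m+(d+q))"
  proof -
    have "(\<Sum>j<Suc n. \<Sum>c<m. (if j \<le> i then of_nat (i choose j) * mderiv (i-j) Fc t $$ (d+q,c) else 0) * X $ (j*m+c))
      = (\<Sum>j<Suc n. \<Sum>c<m. (if j = i \<and> c = d+q then X $ (i*m+(d+q)) else 0))"
    proof (intro sum.cong refl)
      fix j c assume j: "j \<in> {..<Suc n}" and c: "c \<in> {..<m}"
      show "(if j \<le> i then of_nat (i choose j) * mderiv (i-j) Fc t $$ (d+q,c) else 0) * X $ (j*m+c)
          = (if j = i \<and> c = d+q then X $ (i*m+(d+q)) else 0)"
        using c rm by (auto simp: Fc_deriv)
    qed
    also have "\<dots> = X $ (i*m+(d+q))" by (rule sum2_delta[OF i rm])
    finally show ?thesis .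
  qed
  have S1: "(\<Sum>j<Suc n. \<Sum>c<m. (if j \<le> i then of_nat (i choose j) * mderiv (i-j) Ec t $$ (d+q,c) else 0) * X $ (Suc j*m+c))
      = (\<Sum>j\<le>i. \<Sum>c<a. of_nat (i choose j) * mderiv (i-j) N t $$ (q,c) * X $ (Suc j*m+(d+c)))"
  proof -
    have "(\<Sum>j<Suc n. \<Sum>c<m. (if j \<le> i then of_nat (i choose j) * mderiv (i-j) Ec t $$ (d+q,c) else 0) * X $ (Suc j*m+c))
      = (\<Sum>j<Suc n. if j \<le> i then (\<Sum>c<a. of_nat (i choose j) * mderiv (i-j) N t $$ (q,c) * X $ (Suc j*m+(d+c))) else 0)"
    proof (intro sum.cong refl)
      fix j assume j: "j \<in> {..<Suc n}"
      have "(\<Sum>c<m. (if j \<le> i then of_nat (i choose j) * mderiv (i-j) Ec t $$ (d+q,c) else 0) * X $ (Suc j*m+c))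
        = (\<Sum>c<d. (if j \<le> i then of_nat (i choose j) * mderiv (i-j) Ec t $$ (d+q,c) else 0) * X $ (Suc j*m+c))
        + (\<Sum>c<a. (if j \<le> i then of_nat (i choose j) * mderiv (i-j) Ec t $$ (d+q,d+c) else 0) * X $ (Suc j*m+(d+c)))"
        by (rule split_m)
      also have "(\<Sum>c<d. (if j \<le> i then of_nat (i choose j) * mderiv (i-j) Ec t $$ (d+q,c) else 0) * X $ (Suc j*m+c)) = 0"
        using rm ma by (intro sum.neutral ballI) (simp add: Ec_deriv)
      also have "(\<Sum>c<a. (if j \<le> i then of_nat (i choose j) * mderiv (i-j) Ec t $$ (d+q,d+c) else 0) * X $ (Suc j*m+(d+c)))
        = (if j \<le> i then (\<Sum>c<a. of_nat (i choose j) * mderiv (i-j) N t $$ (q,c) * X $ (Suc j*m+(d+c))) else 0)"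
        using rm ma by (auto simp: Ec_deriv intro!: sum.cong)
      finally show "(\<Sum>c<m. (if j \<le> i then of_nat (i choose j) * mderiv (i-j) Ec t $$ (d+q,c) else 0) * X $ (Suc j*m+c))
        = (if j \<le> i then (\<Sum>c<a. of_nat (i choose j) * mderiv (i-j) N t $$ (q,c) * X $ (Suc j*m+(d+c))) else 0)" by simp
    qed
    also have "\<dots> = (\<Sum>j\<le>i. \<Sum>c<a. of_nat (i choose j) * mderiv (i-j) N t $$ (q,c) * X $ (Suc j*m+(d+c)))"
      by (rule sum_upto_restrict[OF i])
    finally show ?thesis .
  qed
  show ?thesis unfolding Mop_entry[OF X i rm] S1 S2 by simp
qed

lemma nu_tri:
  assumes q: "q < a" and c: "c < a" and cq: "c \<le> q"
  shows "mderiv j N t $$ (q,c) = 0"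
proof -
  have "mderiv j N t $$ (q,c) = (deriv ^^ j) (\<lambda>s. N s $$ (q,c)) t"
    by (rule mderiv_index[of N t a a q c j, OF smooth_mat_carrier[OF smN t] q c])
  also have "\<dots> = (deriv ^^ j) (\<lambda>s. 0) t"
    by (rule higher_deriv_local[OF I _ t]) (use Nsut q c cq in \<open>auto simp: strictly_upper_triangular_def\<close>)
  also have "\<dots> = 0" by (simp add: higher_deriv_const_gen)
  finally show ?thesis .
qed


definition "bt i j q c = (if q < c then - (of_nat (i choose j) * mderiv (i-j) N t $$ (q,c)) else 0)"

lemma bt_tri: "c \<le> q \<Longrightarrow> bt i j q c = 0"
  unfolding bt_def by simp

lemma bt_sum:
  assumes q: "q < a"
  shows "(\<Sum>j\<le>i. \<Sum>c<a. - (of_nat (i choose j) * mderiv (i-j) N t $$ (q,c)) * Y j c)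
       = (\<Sum>j\<le>i. \<Sum>c<a. bt i j q c * Y j c)"
proof (intro sum.cong refl)
  fix j c assume c: "c \<in> {..<a}"
  show "- (of_nat (i choose j) * mderiv (i-j) N t $$ (q,c)) * Y j c = bt i j q c * Y j c"
  proof (cases "q < c")
    case True then show ?thesis unfolding bt_def by simp
  next
    case False then show ?thesis unfolding bt_def using nu_tri[OF q _, of c "i-j"] c by simp
  qed
qed

lemma canon_Mop_zero_iff:
  assumes X: "X \<in> carrier_vec (Suc (Suc n) * m)"
  shows "Mop m Ec Fc n t X = 0\<^sub>v (Suc n * m) \<longleftrightarrow>
     (\<forall>i\<le>n. \<forall>r<d. X $ (Suc i*m+r) = (\<Sum>j\<le>i. \<Sum>c<d. - (of_nat (i choose j) * mderiv (i-j) \<Omega> t $$ (r,c)) * X $ (j*m+c))) \<and>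
     (\<forall>i\<le>n. \<forall>q<a. X $ (i*m+(d+q)) = (\<Sum>j\<le>i. \<Sum>c<a. bt i j q c * X $ (Suc j*m+(d+c))))"
    (is "?L \<longleftrightarrow> ?U \<and> ?V")
proof -
  have Mc: "Mop m Ec Fc n t X \<in> carrier_vec (Suc n * m)" by (rule Mop_carrier)
  have u: "Mop m Ec Fc n t X $ (i*m+r) = 0 \<longleftrightarrow>
      X $ (Suc i*m+r) = (\<Sum>j\<le>i. \<Sum>c<d. - (of_nat (i choose j) * mderiv (i-j) \<Omega> t $$ (r,c)) * X $ (j*m+c))"
    if i: "i < Suc n" and r: "r < d" for i r
  proof -
    have "(\<Sum>j\<le>i. \<Sum>c<d. - (of_nat (i choose j) * mderiv (i-j) \<Omega> t $$ (r,c)) * X $ (j*m+c))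
        = - (\<Sum>j\<le>i. \<Sum>c<d. of_nat (i choose j) * mderiv (i-j) \<Omega> t $$ (r,c) * X $ (j*m+c))"
      by (simp add: sum_negf)
    then show ?thesis unfolding canon_Mop_u[OF X i r] by linarith
  qed
  have v: "Mop m Ec Fc n t X $ (i*m+(d+q)) = 0 \<longleftrightarrow>
      X $ (i*m+(d+q)) = (\<Sum>j\<le>i. \<Sum>c<a. bt i j q c * X $ (Suc j*m+(d+c)))"
    if i: "i < Suc n" and q: "q < a" for i q
  proof -
    have "(\<Sum>j\<le>i. \<Sum>c<a. bt i j q c * X $ (Suc j*m+(d+c)))
        = (\<Sum>j\<le>i. \<Sum>c<a. - (of_nat (i choose j) * mderiv (i-j) N t $$ (q,c)) * X $ (Suc j*m+(d+c)))"
      by (rule bt_sum[OF q, symmetric])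
    also have "\<dots> = - (\<Sum>j\<le>i. \<Sum>c<a. of_nat (i choose j) * mderiv (i-j) N t $$ (q,c) * X $ (Suc j*m+(d+c)))"
      by (simp add: sum_negf)
    finally have e: "(\<Sum>j\<le>i. \<Sum>c<a. bt i j q c * X $ (Suc j*m+(d+c))) = - (\<Sum>j\<le>i. \<Sum>c<a. of_nat (i choose j) * mderiv (i-j) N t $$ (q,c) * X $ (Suc j*m+(d+c)))" .
    show ?thesis unfolding canon_Mop_v[OF X i q] e by linarith
  qed
  have "?L \<longleftrightarrow> (\<forall>i<Suc n. \<forall>r<m. Mop m Ec Fc n t X $ (i*m+r) = 0)"
  proof
    assume L: ?L
    show "\<forall>i<Suc n. \<forall>r<m. Mop m Ec Fc n t X $ (i*m+r) = 0"
    proof (intro allI impI)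
      fix i r assume ir: "i < Suc n" "r < m"
      show "Mop m Ec Fc n t X $ (i*m+r) = 0" unfolding L using idx_less[OF ir] by (simp del: mult_Suc)
    qed
  next
    assume R: "\<forall>i<Suc n. \<forall>r<m. Mop m Ec Fc n t X $ (i*m+r) = 0"
    show ?L
    proof (rule vec_eq_blocks[OF Mc])
      show "0\<^sub>v (Suc n * m) \<in> carrier_vec (Suc n * m)" by simp
      fix i r assume ir: "i < Suc n" "r < m"
      show "Mop m Ec Fc n t X $ (i*m+r) = 0\<^sub>v (Suc n * m) $ (i*m+r)" using R ir idx_less[OF ir] by simp
    qed
  qed
  also have "\<dots> \<longleftrightarrow> (\<forall>i<Suc n. (\<forall>r<d. Mop m Ec Fc n t X $ (i*m+r) = 0) \<and> (\<forall>q<a. Mop m Ec Fc n t X $ (i*m+(d+q)) = 0))"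
  proof -
    have "(\<forall>r<m. P r) \<longleftrightarrow> (\<forall>r<d. P r) \<and> (\<forall>q<a. P (d+q))" for P
    proof
      assume "\<forall>r<m. P r" then show "(\<forall>r<d. P r) \<and> (\<forall>q<a. P (d+q))" using ma by auto
    next
      assume h: "(\<forall>r<d. P r) \<and> (\<forall>q<a. P (d+q))"
      show "\<forall>r<m. P r"
      proof (intro allI impI)
        fix r assume "r < m"
        show "P r"
        proof (cases "r < d")
          case True then show ?thesis using h by auto
        next
          case False
          then have "r = d + (r - d)" "r - d < a" using \<open>r < m\<close> ma by auto
          then show ?thesis using h by metis
        qed
      qed
    qed
    then show ?thesis by simp
  qed
  also have "\<dots> \<longleftrightarrow> ?U \<and> ?V"
    using u v by (auto simp: less_Suc_eq_le)
  finally show ?thesis .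
qed

lemma Ec_mult:
  assumes v: "v \<in> carrier_vec m"
  shows "r < d \<Longrightarrow> (Ec t *\<^sub>v v) $ r = v $ r"
    and "q < a \<Longrightarrow> (Ec t *\<^sub>v v) $ (d+q) = (\<Sum>c<a. N t $$ (q,c) * v $ (d+c))"
proof -
  have Et: "Ec t \<in> carrier_mat m m" by (rule Ec_carrier[OF t])
  have N0: "mderiv 0 N t = N t" by (rule mderiv_0[of N t a a, OF smooth_mat_carrier[OF smN t]])
  have E0: "mderiv 0 Ec t = Ec t" by (rule mderiv_0[of Ec t m m, OF Et])
  {
    assume r: "r < d"
    have rm: "r < m" using r ma by simp
    have "(Ec t *\<^sub>v v) $ r = (\<Sum>c<m. v $ c * Ec t $$ (r,c))" by (rule mult_vec_entry[OF Et v rm])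
    also have "\<dots> = (\<Sum>c<m. if c = r then v $ r else 0)"
      by (intro sum.cong refl) (use r rm in \<open>auto simp: Ec_deriv[of r _ 0, unfolded E0]\<close>)
    also have "\<dots> = v $ r" using rm by (simp add: sum.delta)
    finally show "(Ec t *\<^sub>v v) $ r = v $ r" .
  }
  {
    assume q: "q < a"
    have rm: "d + q < m" using q ma by simp
    have "(Ec t *\<^sub>v v) $ (d+q) = (\<Sum>c<m. v $ c * Ec t $$ (d+q,c))" by (rule mult_vec_entry[OF Et v rm])
    also have "\<dots> = (\<Sum>c<d. v $ c * Ec t $$ (d+q,c)) + (\<Sum>c<a. v $ (d+c) * Ec t $$ (d+q,d+c))"
      by (rule split_m)
    also have "(\<Sum>c<d. v $ c * Ec t $$ (d+q,c)) = 0"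
      by (intro sum.neutral ballI) (use rm ma in \<open>simp add: Ec_deriv[of "d+q" _ 0, unfolded E0]\<close>)
    also have "(\<Sum>c<a. v $ (d+c) * Ec t $$ (d+q,d+c)) = (\<Sum>c<a. N t $$ (q,c) * v $ (d+c))"
      by (intro sum.cong refl) (use rm ma in \<open>simp add: Ec_deriv[of "d+q" _ 0, unfolded E0 N0]\<close>)
    finally show "(Ec t *\<^sub>v v) $ (d+q) = (\<Sum>c<a. N t $$ (q,c) * v $ (d+c))" by simp
  }
qed

lemma N_tri0: "q < a \<Longrightarrow> c < a \<Longrightarrow> c \<le> q \<Longrightarrow> N t $$ (q,c) = 0"
  using Nsut t unfolding strictly_upper_triangular_def by auto

end



context canon
begin

lemma split_idx:
  assumes "c < m"
  obtains "c < d" | q where "q < a" "c = d + q"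
proof (cases "c < d")
  case True then show ?thesis using that by blast
next
  case False
  then have "c - d < a" "c = d + (c - d)" using assms ma by auto
  then show ?thesis using that by blast
qed

lemma Mop_from_V:
  assumes X: "X \<in> carrier_vec (Suc (Suc n) * m)"
    and xv: "\<And>j c. j < Suc (Suc n) \<Longrightarrow> c < m \<Longrightarrow> X $ (j*m+c) = (if c < d then 0 else V (c - d) j)"
    and veq: "\<forall>i\<le>n. \<forall>q<a. V q i = (\<Sum>j\<le>i. \<Sum>c<a. bt i j q c * V c (Suc j))"
  shows "Mop m Ec Fc n t X = 0\<^sub>v (Suc n * m)"
  unfolding canon_Mop_zero_iff[OF X]
proof (intro conjI allI impI)
  fix i r assume i: "i \<le> n" and r: "r < d"
  have rm: "r < m" using r ma by simp
  have "X $ (Suc i*m+r) = 0" using xv[of "Suc i" r] i r rm by simp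
  moreover have "(\<Sum>j\<le>i. \<Sum>c<d. - (of_nat (i choose j) * mderiv (i-j) \<Omega> t $$ (r,c)) * X $ (j*m+c)) = 0"
  proof (intro sum.neutral ballI)
    fix j c assume j: "j \<in> {..i}" and c: "c \<in> {..<d}"
    have "X $ (j*m+c) = 0" using xv[of j c] j i c ma by simp
    then show "- (of_nat (i choose j) * mderiv (i-j) \<Omega> t $$ (r,c)) * X $ (j*m+c) = 0" by simp
  qed
  ultimately show "X $ (Suc i*m+r) = (\<Sum>j\<le>i. \<Sum>c<d. - (of_nat (i choose j) * mderiv (i-j) \<Omega> t $$ (r,c)) * X $ (j*m+c))"
    by simp
next
  fix i q assume i: "i \<le> n" and q: "q < a"
  have "X $ (i*m+(d+q)) = V q i" using xv[of i "d+q"] i q ma by simp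
  also have "\<dots> = (\<Sum>j\<le>i. \<Sum>c<a. bt i j q c * V c (Suc j))" using veq i q by blast
  also have "\<dots> = (\<Sum>j\<le>i. \<Sum>c<a. bt i j q c * X $ (Suc j*m+(d+c)))"
  proof (intro sum.cong refl)
    fix j c assume j: "j \<in> {..i}" and c: "c \<in> {..<a}"
    have "X $ (Suc j*m+(d+c)) = V c (Suc j)" using xv[of "Suc j" "d+c"] j i c ma by simp
    then show "bt i j q c * V c (Suc j) = bt i j q c * X $ (Suc j*m+(d+c))" by simp
  qed
  finally show "X $ (i*m+(d+q)) = (\<Sum>j\<le>i. \<Sum>c<a. bt i j q c * X $ (Suc j*m+(d+c)))" .
qed

lemma zero_from_Mop:
  assumes X: "X \<in> carrier_vec (Suc (Suc n) * m)" and M: "Mop m Ec Fc n t X = 0\<^sub>v (Suc n * m)"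
    and x0: "\<forall>c<d. X $ c = 0" and top: "\<forall>q<a. X $ (Suc n*m+(d+q)) = 0"
  shows "\<forall>j<Suc (Suc n). \<forall>c<m. X $ (j*m+c) = 0"
proof -
  note iff = M[unfolded canon_Mop_zero_iff[OF X]]
  define x where "x = (\<lambda>j c. X $ (j*m+c))"
  have ueq: "\<forall>i\<le>n. \<forall>r<d. x (Suc i) r = (\<Sum>j\<le>i. \<Sum>c<d. - (of_nat (i choose j) * mderiv (i-j) \<Omega> t $$ (r,c)) * x j c)"
    using iff unfolding x_def by blast
  have x0': "\<forall>c<d. x 0 c = 0" using x0 unfolding x_def by simp
  have uz: "\<forall>i\<le>Suc n. \<forall>r<d. x i r = 0" by (rule U_zero[OF x0' ueq])
  define V where "V = (\<lambda>q i. X $ (i*m+(d+q)))"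
  have veq: "\<forall>i\<le>n. \<forall>q<a. V q i = (\<Sum>j\<le>i. \<Sum>c<a. bt i j q c * V c (Suc j))"
    using iff unfolding V_def by blast
  have vtop: "\<forall>q<a. V q (Suc n) = 0" using top unfolding V_def by simp
  have vz: "\<forall>q<a. \<forall>i\<le>Suc n. V q i = 0" by (rule V1[OF bt_tri veq vtop])
  show ?thesis
  proof (intro allI impI)
    fix j c assume j: "j < Suc (Suc n)" and c: "c < m"
    from c show "X $ (j*m+c) = 0"
    proof (cases rule: split_idx)
      case 1 then show ?thesis using uz j unfolding x_def by simp
    next
      case (2 q) then show ?thesis using vz j unfolding V_def by simp
    qed
  qed
qed

lemma canon_kdimE:
  assumes k: "a - 1 \<le> k"
  shows "kernel.dim (Suc k * m) (calE m Ec Fc k t) = a"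
proof (rule kdim_proj[OF calE_carrier, where off = "k*m + d"])
  show "k*m + d + a \<le> Suc k * m" using ma by simp
next
  fix y assume y: "y \<in> mat_kernel (calE m Ec Fc k t)" and z: "\<forall>q<a. y $ (k*m + d + q) = 0"
  have yc: "y \<in> carrier_vec (Suc k * m)" and yz: "calE m Ec Fc k t *\<^sub>v y = 0\<^sub>v (Suc k * m)"
    using mat_kernelD[OF calE_carrier y] by auto
  define X where "X = 0\<^sub>v m @\<^sub>v y"
  have X: "X \<in> carrier_vec (Suc (Suc k) * m)"
    unfolding X_def Suc_Suc_mult using yc by (rule append_carrier_vec[OF zero_carrier_vec])
  have M: "Mop m Ec Fc k t X = 0\<^sub>v (Suc k * m)" unfolding X_def Mop_zero[OF yc] yz ..
  have x0: "\<forall>c<d. X $ c = 0" unfolding X_def using yc ma by simp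
  have top: "\<forall>q<a. X $ (Suc k*m+(d+q)) = 0"
  proof (intro allI impI)
    fix q assume q: "q < a"
    have "X $ (Suc k*m+(d+q)) = y $ (k*m+(d+q))"
      unfolding X_def using zero_append_index[OF yc, of "Suc k" "d+q"] q ma by simp
    then show "X $ (Suc k*m+(d+q)) = 0" using z q by (simp add: add.assoc)
  qed
  have all: "\<forall>j<Suc (Suc k). \<forall>c<m. X $ (j*m+c) = 0" by (rule zero_from_Mop[OF X M x0 top])
  show "y = 0\<^sub>v (Suc k * m)"
  proof (rule vec_eq_blocks[OF yc])
    show "0\<^sub>v (Suc k * m) \<in> carrier_vec (Suc k * m)" by simp
    fix j c assume j: "j < Suc k" and c: "c < m"
    have "X $ (Suc j*m+c) = y $ (j*m+c)"
      unfolding X_def using zero_append_index[OF yc, of "Suc j" c] j c by simp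
    then show "y $ (j*m+c) = 0\<^sub>v (Suc k * m) $ (j*m+c)" using all j c idx_less[OF j c] by auto
  qed
next
  fix w :: "real vec" assume w: "w \<in> carrier_vec a"
  obtain V where veq: "\<forall>i\<le>k. \<forall>q<a. V q i = (\<Sum>j\<le>i. \<Sum>c<a. bt i j q c * V c (Suc j))"
    and vtop: "\<forall>q<a. V q (Suc k) = w $ q"
    using V3[of bt k a "\<lambda>q. w $ q"] bt_tri by blast
  have V0: "\<forall>q<a. V q 0 = 0" using V2[OF bt_tri veq] k by auto
  define y where "y = vec (Suc k * m) (\<lambda>p. if p mod m < d then 0 else V (p mod m - d) (Suc (p div m)))"
  have yc: "y \<in> carrier_vec (Suc k * m)" unfolding y_def by simp
  define X where "X = 0\<^sub>v m @\<^sub>v y"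
  have X: "X \<in> carrier_vec (Suc (Suc k) * m)"
    unfolding X_def Suc_Suc_mult using yc by (rule append_carrier_vec[OF zero_carrier_vec])
  have xv: "X $ (j*m+c) = (if c < d then 0 else V (c - d) j)" if j: "j < Suc (Suc k)" and c: "c < m" for j c
  proof (cases j)
    case 0
    have X0: "X $ (j*m+c) = 0" unfolding X_def using zero_append_index[OF yc j c] 0 by simp
    show ?thesis
    proof (cases "c < d")
      case True then show ?thesis using X0 by simp
    next
      case False
      then have "c - d < a" using c ma by simp
      then show ?thesis using V0 0 X0 False by simp
    qed
  next
    case (Suc j')
    have "X $ (j*m+c) = y $ (j'*m+c)" unfolding X_def using zero_append_index[OF yc j c] Suc by simp
    also have "\<dots> = (if c < d then 0 else V (c - d) j)"
      unfolding y_def using idx_less[of j' "Suc k" c m] j c Suc by simp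
    finally show ?thesis .
  qed
  have M: "Mop m Ec Fc k t X = 0\<^sub>v (Suc k * m)" by (rule Mop_from_V[OF X xv veq])
  have yk: "y \<in> mat_kernel (calE m Ec Fc k t)"
    by (rule mat_kernelI[OF calE_carrier yc]) (use M Mop_zero[OF yc] in \<open>simp add: X_def\<close>)
  moreover have "\<forall>q<a. y $ (k*m + d + q) = w $ q"
  proof (intro allI impI)
    fix q assume q: "q < a"
    have "y $ (k*m + d + q) = X $ (Suc k * m + (d + q))"
      unfolding X_def using zero_append_index[OF yc, of "Suc k" "d+q"] q ma by (simp add: add.assoc)
    also have "\<dots> = V q (Suc k)" using xv[of "Suc k" "d+q"] q ma by simp
    finally show "y $ (k*m + d + q) = w $ q" using vtop q by simp
  qed
  ultimately show "\<exists>y\<in>mat_kernel (calE m Ec Fc k t). \<forall>q<a. y $ (k*m + d + q) = w $ q" by blast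
qed


lemma Ec_kernel_u:
  assumes v: "v \<in> carrier_vec m" and z: "Ec t *\<^sub>v v = 0\<^sub>v m" and r: "r < d"
  shows "v $ r = 0"
proof -
  have "v $ r = (Ec t *\<^sub>v v) $ r" using Ec_mult(1)[OF v r] by simp
  also have "\<dots> = 0" using z r ma by simp
  finally show ?thesis .
qed

lemma canon_kdimD0:
  assumes k: "a \<le> 1"
  shows "kernel.dim m (Ec t) = a"
proof (rule kdim_proj[OF Ec_carrier[OF t], where off = d])
  show "d + a \<le> m" using ma by simp
next
  fix y assume y: "y \<in> mat_kernel (Ec t)" and z: "\<forall>q<a. y $ (d + q) = 0"
  have yc: "y \<in> carrier_vec m" and yz: "Ec t *\<^sub>v y = 0\<^sub>v m"
    using mat_kernelD[OF Ec_carrier[OF t] y] by auto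
  show "y = 0\<^sub>v m"
  proof (rule eq_vecI)
    fix p assume "p < dim_vec (0\<^sub>v m)"
    then have p: "p < m" by simp
    from p show "y $ p = 0\<^sub>v m $ p"
    proof (cases rule: split_idx)
      case 1 then show ?thesis using Ec_kernel_u[OF yc yz] p by simp
    next
      case (2 q) then show ?thesis using z p by simp
    qed
  qed (use yc in simp)
next
  fix w :: "real vec" assume w: "w \<in> carrier_vec a"
  define y where "y = vec m (\<lambda>p. if p < d then 0 else w $ (p - d))"
  have yc: "y \<in> carrier_vec m" unfolding y_def by simp
  have yz: "Ec t *\<^sub>v y = 0\<^sub>v m"
  proof (rule eq_vecI)
    fix p assume "p < dim_vec (0\<^sub>v m)"
    then have p: "p < m" by simp
    from p show "(Ec t *\<^sub>v y) $ p = 0\<^sub>v m $ p"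
    proof (cases rule: split_idx)
      case 1 then show ?thesis using Ec_mult(1)[OF yc] p unfolding y_def by simp
    next
      case (2 q)
      have "(Ec t *\<^sub>v y) $ (d+q) = (\<Sum>c<a. N t $$ (q,c) * y $ (d+c))" by (rule Ec_mult(2)[OF yc 2(1)])
      also have "\<dots> = 0"
      proof (intro sum.neutral ballI)
        fix c assume c: "c \<in> {..<a}"
        then have "c \<le> q" using k 2 by auto
        then show "N t $$ (q,c) * y $ (d+c) = 0" using N_tri0 2 c by auto
      qed
      finally show ?thesis using 2 p by simp
    qed
  qed (use yc Ec_carrier[OF t] in simp)
  have "y \<in> mat_kernel (Ec t)" by (rule mat_kernelI[OF Ec_carrier[OF t] yc yz])
  moreover have "\<forall>q<a. y $ (d + q) = w $ q" unfolding y_def using ma by simp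
  ultimately show "\<exists>y\<in>mat_kernel (Ec t). \<forall>q<a. y $ (d + q) = w $ q" by blast
qed

lemma canon_kdimD_Suc:
  assumes k: "a - 1 \<le> Suc k"
  shows "kernel.dim (Suc (Suc k) * m) (calD m Ec Fc (Suc k) t) = a"
proof -
  have Et: "Ec t \<in> carrier_mat m m" by (rule Ec_carrier[OF t])
  have cD: "calD m Ec Fc (Suc k) t \<in> carrier_mat (Suc (Suc k) * m) (Suc (Suc k) * m)"
    unfolding calD_def using four_block_carrier_mat[OF Et calE_carrier] by simp
  have ker: "X \<in> mat_kernel (calD m Ec Fc (Suc k) t) \<longleftrightarrow> X \<in> carrier_vec (Suc (Suc k) * m)
      \<and> Ec t *\<^sub>v vec_first X m = 0\<^sub>v m \<and> Mop m Ec Fc k t X = 0\<^sub>v (Suc k * m)" for X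
  proof (cases "X \<in> carrier_vec (Suc (Suc k) * m)")
    case True
    have "calD m Ec Fc (Suc k) t *\<^sub>v X = (Ec t *\<^sub>v vec_first X m) @\<^sub>v Mop m Ec Fc k t X"
      by (rule calD_Suc_mult[of X k m Ec t Fc, OF True Et])
    moreover have "(Ec t *\<^sub>v vec_first X m) @\<^sub>v Mop m Ec Fc k t X = 0\<^sub>v (m + Suc k * m)
       \<longleftrightarrow> Ec t *\<^sub>v vec_first X m = 0\<^sub>v m \<and> Mop m Ec Fc k t X = 0\<^sub>v (Suc k * m)"
      by (rule append_zero_iff[OF mult_mat_vec_carrier[OF Et vec_first_carrier] Mop_carrier])
    ultimately show ?thesis
      using True mat_kernel[OF cD] by (simp add: Suc_Suc_mult[symmetric])
  next
    case False then show ?thesis using mat_kernel[OF cD] by auto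
  qed
  show ?thesis
  proof (rule kdim_proj[OF cD, where off = "Suc k * m + d"])
    show "Suc k * m + d + a \<le> Suc (Suc k) * m" using ma by simp
  next
    fix X assume X: "X \<in> mat_kernel (calD m Ec Fc (Suc k) t)" and z: "\<forall>q<a. X $ (Suc k * m + d + q) = 0"
    have Xc: "X \<in> carrier_vec (Suc (Suc k) * m)" and E0: "Ec t *\<^sub>v vec_first X m = 0\<^sub>v m"
      and M: "Mop m Ec Fc k t X = 0\<^sub>v (Suc k * m)" using X ker by auto
    have x0: "\<forall>c<d. X $ c = 0"
    proof (intro allI impI)
      fix c assume c: "c < d"
      have "vec_first X m $ c = 0" by (rule Ec_kernel_u[OF vec_first_carrier E0 c])
      then show "X $ c = 0" using c ma by (simp add: vec_first_index)
    qed
    have top: "\<forall>q<a. X $ (Suc k*m+(d+q)) = 0" using z by (simp add: add.assoc)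
    have all: "\<forall>j<Suc (Suc k). \<forall>c<m. X $ (j*m+c) = 0" by (rule zero_from_Mop[OF Xc M x0 top])
    show "X = 0\<^sub>v (Suc (Suc k) * m)"
    proof (rule vec_eq_blocks[OF Xc])
      show "0\<^sub>v (Suc (Suc k) * m) \<in> carrier_vec (Suc (Suc k) * m)" by simp
      fix j c assume j: "j < Suc (Suc k)" and c: "c < m"
      show "X $ (j*m+c) = 0\<^sub>v (Suc (Suc k) * m) $ (j*m+c)" using all j c idx_less[OF j c] by auto
    qed
  next
    fix w :: "real vec" assume w: "w \<in> carrier_vec a"
    obtain V where veq: "\<forall>i\<le>k. \<forall>q<a. V q i = (\<Sum>j\<le>i. \<Sum>c<a. bt i j q c * V c (Suc j))"
      and vtop: "\<forall>q<a. V q (Suc k) = w $ q"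
      using V3[of bt k a "\<lambda>q. w $ q"] bt_tri by blast
    have V0: "\<forall>q<a. 0 < q \<longrightarrow> V q 0 = 0" using V2[OF bt_tri veq] k by auto
    define X where "X = vec (Suc (Suc k) * m) (\<lambda>p. if p mod m < d then 0 else V (p mod m - d) (p div m))"
    have Xc: "X \<in> carrier_vec (Suc (Suc k) * m)" unfolding X_def by simp
    have xv: "X $ (j*m+c) = (if c < d then 0 else V (c - d) j)" if j: "j < Suc (Suc k)" and c: "c < m" for j c
      unfolding X_def using idx_less[OF j c] c by simp
    have M: "Mop m Ec Fc k t X = 0\<^sub>v (Suc k * m)" by (rule Mop_from_V[OF Xc xv veq])
    have E0: "Ec t *\<^sub>v vec_first X m = 0\<^sub>v m"
    proof (rule eq_vecI)
      have vf: "vec_first X m \<in> carrier_vec m" by simp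
      fix p assume "p < dim_vec (0\<^sub>v m)"
      then have p: "p < m" by simp
      from p show "(Ec t *\<^sub>v vec_first X m) $ p = 0\<^sub>v m $ p"
      proof (cases rule: split_idx)
        case 1
        have "vec_first X m $ p = X $ (0*m+p)" using p by (simp add: vec_first_index)
        also have "\<dots> = 0" using xv[of 0 p] 1 p by simp
        finally show ?thesis using Ec_mult(1)[OF vf 1] p by simp
      next
        case (2 q)
        have "(Ec t *\<^sub>v vec_first X m) $ (d+q) = (\<Sum>c<a. N t $$ (q,c) * vec_first X m $ (d+c))"
          by (rule Ec_mult(2)[OF vf 2(1)])
        also have "\<dots> = 0"
        proof (intro sum.neutral ballI)
          fix c assume c: "c \<in> {..<a}"
          show "N t $$ (q,c) * vec_first X m $ (d+c) = 0"
          proof (cases "c \<le> q")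
            case True then show ?thesis using N_tri0 2 c by auto
          next
            case False
            have "vec_first X m $ (d+c) = X $ (0*m+(d+c))" using c ma by (simp add: vec_first_index)
            also have "\<dots> = V c 0" using xv[of 0 "d+c"] c ma by simp
            also have "\<dots> = 0" using V0 False c by auto
            finally show ?thesis by simp
          qed
        qed
        finally show ?thesis using 2 p by simp
      qed
    qed (use Et in simp)
    have "X \<in> mat_kernel (calD m Ec Fc (Suc k) t)" using ker Xc E0 M by blast
    moreover have "\<forall>q<a. X $ (Suc k * m + d + q) = w $ q"
    proof (intro allI impI)
      fix q assume q: "q < a"
      have "X $ (Suc k * m + d + q) = X $ (Suc k * m + (d + q))" by (simp add: add.assoc)
      also have "\<dots> = V q (Suc k)" using xv[of "Suc k" "d+q"] q ma by simp
      finally show "X $ (Suc k * m + d + q) = w $ q" using vtop q by simp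
    qed
    ultimately show "\<exists>y\<in>mat_kernel (calD m Ec Fc (Suc k) t). \<forall>q<a. y $ (Suc k * m + d + q) = w $ q" by blast
  qed
qed

lemma canon_kdimD:
  assumes k: "a - 1 \<le> k"
  shows "kernel.dim (Suc k * m) (calD m Ec Fc k t) = a"
proof (cases k)
  case 0
  then have "a \<le> 1" using k by simp
  then show ?thesis using canon_kdimD0 0 by (simp add: calD_def)
next
  case (Suc k')
  then show ?thesis using canon_kdimD_Suc[of k'] k by simp
qed

lemma canon_S:
  assumes k: "a \<le> k"
  shows "mat_kernel (Ec t) \<inter> calS m Ec Fc k t \<subseteq> {0\<^sub>v m}"
proof
  fix z assume z: "z \<in> mat_kernel (Ec t) \<inter> calS m Ec Fc k t"
  have zc: "z \<in> carrier_vec m" and Ez: "Ec t *\<^sub>v z = 0\<^sub>v m"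
    using z mat_kernelD[OF Ec_carrier[OF t]] by auto
  from z obtain y where y: "y \<in> carrier_vec (Suc k * m)" and Fy: "calF m Fc k t *\<^sub>v z = calE m Ec Fc k t *\<^sub>v y"
    unfolding calS_def by auto
  define X where "X = z @\<^sub>v (- y)"
  have X: "X \<in> carrier_vec (Suc (Suc k) * m)"
    unfolding X_def Suc_Suc_mult using zc y by auto
  have M: "Mop m Ec Fc k t X = 0\<^sub>v (Suc k * m)"
  proof -
    have "Mop m Ec Fc k t X = calF m Fc k t *\<^sub>v z + calE m Ec Fc k t *\<^sub>v (- y)"
      unfolding X_def by (rule Mop_append[OF zc]) (use y in auto)
    also have "\<dots> = calE m Ec Fc k t *\<^sub>v y + - (calE m Ec Fc k t *\<^sub>v y)"
      unfolding Fy mult_vec_uminus[OF calE_carrier y] ..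
    also have "\<dots> = 0\<^sub>v (Suc k * m)"
      by (rule uminus_r_inv_vec[OF mult_mat_vec_carrier[OF calE_carrier y]])
    finally show ?thesis .
  qed
  note iff = M[unfolded canon_Mop_zero_iff[OF X]]
  define V where "V = (\<lambda>q i. X $ (i*m+(d+q)))"
  have veq: "\<forall>i\<le>k. \<forall>q<a. V q i = (\<Sum>j\<le>i. \<Sum>c<a. bt i j q c * V c (Suc j))"
    using iff unfolding V_def by blast
  have V0: "\<forall>q<a. V q 0 = 0" using V2[OF bt_tri veq] k by auto
  show "z \<in> {0\<^sub>v m}"
  proof -
    have "z = 0\<^sub>v m"
    proof (rule eq_vecI)
      fix p assume "p < dim_vec (0\<^sub>v m)"
      then have p: "p < m" by simp
      from p show "z $ p = 0\<^sub>v m $ p"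
      proof (cases rule: split_idx)
        case 1 then show ?thesis using Ec_kernel_u[OF zc Ez] p by simp
      next
        case (2 q)
        have "z $ (d+q) = X $ (0*m+(d+q))" unfolding X_def using zc y 2 p by simp
        also have "\<dots> = 0" using V0 2 unfolding V_def by simp
        finally show ?thesis using 2 p by simp
      qed
    qed (use zc in simp)
    then show ?thesis by simp
  qed
qed
end




lemma calD_carrier:
  assumes "E t \<in> carrier_mat m m"
  shows "calD m E F k t \<in> carrier_mat (Suc k * m) (Suc k * m)"
proof (cases k)
  case 0 then show ?thesis using assms by (simp add: calD_def)
next
  case (Suc k')
  then show ?thesis unfolding calD_def using four_block_carrier_mat[OF assms calE_carrier] by simp
qed

lemma mat_kernel_one: "mat_kernel (1\<^sub>m n) = {0\<^sub>v n :: real vec}"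
  unfolding mat_kernel_def by auto

lemma subspace_dim_zero: "subspace_dim n {0\<^sub>v n} = 0"
proof -
  have "subspace_dim n {0\<^sub>v n} = kernel.dim n (1\<^sub>m n :: real mat)"
    unfolding subspace_dim_def mat_kernel_one ..
  also have "\<dots> = 0" by (rule kernel_one_mat)
  finally show ?thesis .
qed

theorem theoremt:
  fixes I :: "real set" and m d a :: nat
    and E F \<Omega> N :: "real \<Rightarrow> real mat"
  assumes I: "open I" "is_interval I"
    and ma: "m = d + a"
    and smE: "smooth_mat_on I m m E" and smF: "smooth_mat_on I m m F"
    and smO: "smooth_mat_on I d d \<Omega>" and smN: "smooth_mat_on I a a N"
    and Nsut: "\<forall>t\<in>I. strictly_upper_triangular a (N t)"
    and eqv: "equiv_pair I m E F
       (\<lambda>t. four_block_mat (1\<^sub>m d) (0\<^sub>m d a) (0\<^sub>m a d) (N t))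
       (\<lambda>t. four_block_mat (\<Omega> t) (0\<^sub>m d a) (0\<^sub>m a d) (1\<^sub>m a))"
  shows "(\<forall>t\<in>I. \<forall>k. k \<ge> a - 1 \<longrightarrow>
            mrank (calE m E F k t) = k*m + d \<and> mrank (calD m E F k t) = k*m + d)
       \<and> (\<forall>t\<in>I. \<forall>k. k \<ge> a \<longrightarrow>
            subspace_dim m (mat_kernel (E t) \<inter> calS m E F k t) = 0)"
proof -
  obtain L K where sL: "smooth_mat_on I m m L" and sK: "smooth_mat_on I m m K"
    and LK: "\<forall>t\<in>I. det (L t) \<noteq> 0 \<and> det (K t) \<noteq> 0 \<and>
        four_block_mat (1\<^sub>m d) (0\<^sub>m d a) (0\<^sub>m a d) (N t) = L t * E t * K t \<and>
        four_block_mat (\<Omega> t) (0\<^sub>m d a) (0\<^sub>m a d) (1\<^sub>m a) = L t * F t * K t + L t * E t * mderiv 1 K t"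
    using eqv unfolding equiv_pair_def by auto
  have main: "(\<forall>k. k \<ge> a - 1 \<longrightarrow> mrank (calE m E F k t) = k*m + d \<and> mrank (calD m E F k t) = k*m + d)
       \<and> (\<forall>k. k \<ge> a \<longrightarrow> subspace_dim m (mat_kernel (E t) \<inter> calS m E F k t) = 0)"
    if t: "t \<in> I" for t
  proof -
    interpret C: canon I m d a \<Omega> N t
      by (unfold_locales) (use I(1) t ma smO smN Nsut in auto)
    have eqE: "\<And>s. s \<in> I \<Longrightarrow> C.Ec s = L s * E s * K s"
      using LK unfolding C.Ec_def by auto
    have eqF: "\<And>s. s \<in> I \<Longrightarrow> C.Fc s = L s * F s * K s + L s * E s * mderiv 1 K s"
      using LK unfolding C.Fc_def by auto
    have dL: "det (L t) \<noteq> 0" and dK: "det (K t) \<noteq> 0" using LK t by auto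
    note tr = I(1) t smE smF sL sK C.smooth_Ec C.smooth_Fc eqE eqF dL dK
    have Et: "E t \<in> carrier_mat m m" using smooth_mat_carrier[OF smE t] .
    have r1: "mrank (calE m E F k t) = k*m + d \<and> mrank (calD m E F k t) = k*m + d" if k: "a - 1 \<le> k" for k
    proof -
      have "kernel.dim (Suc k * m) (calE m E F k t) = a"
        using kdimE[OF tr, of k] C.canon_kdimE[OF k] by simp
      moreover have "kernel.dim (Suc k * m) (calD m E F k t) = a"
        using kdimD[OF tr, of k] C.canon_kdimD[OF k] by simp
      moreover have "mrank (calE m E F k t) + kernel.dim (Suc k * m) (calE m E F k t) = Suc k * m"
        by (rule rank_nullity_mat[OF calE_carrier])
      moreover have "mrank (calD m E F k t) + kernel.dim (Suc k * m) (calD m E F k t) = Suc k * m"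
        by (rule rank_nullity_mat[OF calD_carrier[of E t m F k, OF Et]])
      ultimately show ?thesis using ma by simp
    qed
    have r2: "subspace_dim m (mat_kernel (E t) \<inter> calS m E F k t) = 0" if k: "a \<le> k" for k
    proof -
      have sub: "mat_kernel (E t) \<inter> calS m E F k t \<subseteq> {0\<^sub>v m}"
        by (rule S_transfer[OF tr C.canon_S[OF k]])
      have "0\<^sub>v m \<in> mat_kernel (E t)"
        by (rule mat_kernelI[OF Et zero_carrier_vec mult_zero_vec_mat[OF Et]])
      moreover have "0\<^sub>v m \<in> calS m E F k t"
        unfolding calS_def
        using mult_zero_vec_mat[OF calF_carrier] mult_zero_vec_mat[OF calE_carrier]
        by (auto intro!: bexI[of _ "0\<^sub>v (Suc k * m)"])
      ultimately have "mat_kernel (E t) \<inter> calS m E F k t = {0\<^sub>v m}" using sub by blast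
      then show ?thesis using subspace_dim_zero by simp
    qed
    show ?thesis using r1 r2 by auto
  qed
  show ?thesis using main by blast
qed


end
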